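(* Assume $0<\alpha<1$ and $E\in\mathrm{Swath}(\alpha)$. Let $X_E=X_E(\alpha)$ and $S_E=S_E(\alpha)$. The quadratic polynomial $t\mapsto\mathrm{tr}\big(((E+tX_E)S_E)^2\big)$ is strictly convex and its minimizer $t_E=t_E(\alpha)$ satisfies $\delta:=t_E-\tfrac12\alpha/\|X_E\|_E>0$. Moreover, \[ t_E-\delta\le t\le t_E+\delta\ \Rightarrow\ E(t)\in\mathrm{Swath}(\beta)\ \text{and}\ S_E\in\mathrm{int}\big(K_{E(t)}(\beta)^*\big), \] where $E(t):=\frac{1}{1+t}(E+tX_E)$ and $\beta=\alpha\sqrt{\tfrac{1+\alpha}{2}}$.
   Context: $\mathbb{S}^n$ is the space of real symmetric $n\times n$ matrices, $\mathbb{S}^n_{++}$ the positive definite matrices. Given $C,A_1,\ldots,A_m\in\mathbb{S}^n$, $b\in\mathbb{R}^m$, let $\mathcal{A}(X)=(\mathrm{tr}(A_iX))_i$ and $\mathcal{A}^*y=\sum_iy_iA_i$. Standing assumptions: the SDP $\min\mathrm{tr}(CX)$ s.t. $\mathcal{A}(X)=b$, $X\succeq0$ and its dual $\max b^Ty$ s.t. $\mathcal{A}^*y+S=C$, $S\succeq0$ are strictly feasible; $b\ne0$; $C$ is not a linear combination of the $A_i$; the $A_i$ are linearly independent. For $E\in\mathbb{S}^n_{++}$: $\|X\|_E=\mathrm{tr}((E^{-1}X)^2)^{1/2}$; $K_E(\gamma)=\{X:\mathrm{tr}(E^{-1}X)\ge\gamma\|X\|_E\}$; $K_E(\gamma)^*$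 its dual cone w.r.t. the trace inner product. $\mathrm{QP}_E(\gamma)$: $\min\mathrm{tr}(CX)$ s.t. $\mathcal{A}(X)=b$, $X\in K_E(\gamma)$; dual $\mathrm{QP}_E(\gamma)^*$: $\max b^Ty$ s.t. $\mathcal{A}^*y+S=C$, $S\in K_E(\gamma)^*$. $\mathrm{Swath}(\gamma)=\{E\in\mathbb{S}^n_{++}:\mathcal{A}(E)=b,\ \mathrm{QP}_E(\gamma)\text{ has an optimal solution}\}$. For $E\in\mathrm{Swath}(\alpha)$, $X_E(\alpha)$ is the optimal solution of $\mathrm{QP}_E(\alpha)$ and $(y_E(\alpha),S_E(\alpha))$ the optimal solution of $\mathrm{QP}_E(\alpha)^*$. *)

theory Defs
  imports "HOL-Analysis.Analysis"
begin

text \<open>Real symmetric n x n matrices are modelled as elements of real^'n^'n with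
  transpose X = X; the index type 'n (finite) is the dimension n.\<close>

definition symm :: "real^'n^'n \<Rightarrow> bool" where
  "symm X \<longleftrightarrow> transpose X = X"

definition posdef :: "real^'n^'n \<Rightarrow> bool" where
  "posdef X \<longleftrightarrow> symm X \<and> (\<forall>v. v \<noteq> 0 \<longrightarrow> v \<bullet> (X *v v) > 0)"

definition psd :: "real^'n^'n \<Rightarrow> bool" where
  "psd X \<longleftrightarrow> symm X \<and> (\<forall>v. v \<bullet> (X *v v) \<ge> 0)"

definition opA :: "('m \<Rightarrow> real^'n^'n) \<Rightarrow> real^'n^'n \<Rightarrow> real^'m" where
  "opA A X = (\<chi> i. trace (A i ** X))"

definition opAadj :: "('m::finite \<Rightarrow> real^'n^'n) \<Rightarrow> real^'m \<Rightarrow> real^'n^'n" where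
  "opAadj A y = (\<Sum>i\<in>UNIV. (y $ i) *\<^sub>R A i)"

definition normE :: "real^'n^'n \<Rightarrow> real^'n^'n \<Rightarrow> real" where
  "normE E X = sqrt (trace ((matrix_inv E ** X) ** (matrix_inv E ** X)))"

definition KE :: "real^'n^'n \<Rightarrow> real \<Rightarrow> (real^'n^'n) set" where
  "KE E \<gamma> = {X. symm X \<and> trace (matrix_inv E ** X) \<ge> \<gamma> * normE E X}"

definition dual_cone :: "(real^'n^'n) set \<Rightarrow> (real^'n^'n) set" where
  "dual_cone K = {S. symm S \<and> (\<forall>X\<in>K. trace (S ** X) \<ge> 0)}"

definition int_sym :: "(real^'n^'n) set \<Rightarrow> (real^'n^'n) set" where
  "int_sym K = {S\<in>K. \<exists>e>0. \<forall>T. symm T \<and> norm (T - S) < e \<longrightarrow> T \<in> K}"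

definition QP_opt :: "('m \<Rightarrow> real^'n^'n) \<Rightarrow> real^'m \<Rightarrow> real^'n^'n \<Rightarrow> real^'n^'n \<Rightarrow> real
    \<Rightarrow> real^'n^'n \<Rightarrow> bool" where
  "QP_opt A b C E \<gamma> X \<longleftrightarrow> opA A X = b \<and> X \<in> KE E \<gamma> \<and>
     (\<forall>X'. opA A X' = b \<and> X' \<in> KE E \<gamma> \<longrightarrow> trace (C ** X) \<le> trace (C ** X'))"

definition QPdual_opt :: "('m::finite \<Rightarrow> real^'n^'n) \<Rightarrow> real^'m \<Rightarrow> real^'n^'n \<Rightarrow> real^'n^'n \<Rightarrow> real
    \<Rightarrow> real^'m \<Rightarrow> real^'n^'n \<Rightarrow> bool" where
  "QPdual_opt A b C E \<gamma> y S \<longleftrightarrow> opAadj A y + S = C \<and> S \<in> dual_cone (KE E \<gamma>) \<and>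
     (\<forall>y' S'. opAadj A y' + S' = C \<and> S' \<in> dual_cone (KE E \<gamma>) \<longrightarrow> b \<bullet> y' \<le> b \<bullet> y)"

definition Swath :: "('m \<Rightarrow> real^'n^'n) \<Rightarrow> real^'m \<Rightarrow> real^'n^'n \<Rightarrow> real \<Rightarrow> (real^'n^'n) set" where
  "Swath A b C \<gamma> = {E. posdef E \<and> opA A E = b \<and> (\<exists>X. QP_opt A b C E \<gamma> X)}"

definition strict_convex_on :: "real set \<Rightarrow> (real \<Rightarrow> real) \<Rightarrow> bool" where
  "strict_convex_on S f \<longleftrightarrow> convex S \<and>
    (\<forall>x\<in>S. \<forall>y\<in>S. x \<noteq> y \<longrightarrow> (\<forall>u>0. \<forall>v>0. u + v = 1 \<longrightarrow>
       f (u * x + v * y) < u * f x + v * f y))"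

end

theory Submission
  imports Defs
begin


lemma matrix_add_rdistrib: "((B + C) ** A) = (B ** A) + (C ** A)"
  by (vector matrix_matrix_mult_def sum.distrib[symmetric] field_simps)

lemma matrix_diff_ldistrib: "(A ** (B - C)) = (A ** B) - (A ** (C::real^'n^'m))"
  by (vector matrix_matrix_mult_def sum_subtractf[symmetric] field_simps)

lemma matrix_diff_rdistrib: "((B - C) ** A) = (B ** A) - (C ** (A::real^'n^'m))"
  by (vector matrix_matrix_mult_def sum_subtractf[symmetric] field_simps)

lemma trace_scaleR: "trace (c *\<^sub>R (A::real^'n^'n)) = c * trace A"
  by (simp add: trace_def sum_distrib_left)

lemma trace_mult_def: "trace ((A::real^'n^'n) ** B) = (\<Sum>i\<in>UNIV. \<Sum>k\<in>UNIV. A$i$k * B$k$i)"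
  by (simp add: trace_def matrix_matrix_mult_def)

lemma inner_mat_def: "(A::real^'n^'n) \<bullet> B = (\<Sum>i\<in>UNIV. \<Sum>k\<in>UNIV. A$i$k * B$i$k)"
  by (simp add: inner_vec_def)

lemma symm_entry: "symm V \<Longrightarrow> V$k$i = V$i$k"
  unfolding symm_def by (metis transpose_def vec_lambda_beta)

lemma trace_symm_inner: "symm V \<Longrightarrow> trace (U ** V) = U \<bullet> V"
  by (simp add: trace_mult_def inner_mat_def symm_entry)

lemma trace_inner_one: "trace (U::real^'n^'n) = U \<bullet> mat 1"
  by (simp add: trace_def inner_mat_def mat_def if_distrib cong: if_cong)

lemma inner_one_one: "(mat 1::real^'n^'n) \<bullet> mat 1 = real CARD('n)"
  using trace_inner_one[of "mat 1 :: real^'n^'n"] by (simp add: trace_I)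

lemma symm_add[simp]: "symm A \<Longrightarrow> symm B \<Longrightarrow> symm (A + B)"
  by (simp add: symm_def transpose_def vec_eq_iff)
lemma symm_diff[simp]: "symm A \<Longrightarrow> symm B \<Longrightarrow> symm (A - B)"
  by (simp add: symm_def transpose_def vec_eq_iff)
lemma symm_scaleR[simp]: "symm A \<Longrightarrow> symm (c *\<^sub>R A)"
  by (simp add: symm_def transpose_scalar)
lemma symm_uminus[simp]: "symm A \<Longrightarrow> symm (- A)"
  by (simp add: symm_def transpose_def vec_eq_iff)
lemma symm_one[simp]: "symm (mat 1)"
  by (simp add: symm_def)
lemma symm_zero[simp]: "symm 0"
  by (simp add: symm_def transpose_def vec_eq_iff)
lemma symm_congr: "symm Y \<Longrightarrow> symm (transpose L ** Y ** L)"
  by (simp add: symm_def matrix_transpose_mul matrix_mul_assoc)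
lemma symm_congr2: "symm Y \<Longrightarrow> symm (L ** Y ** transpose L)"
  by (simp add: symm_def matrix_transpose_mul matrix_mul_assoc)
lemma symm_sq: "symm Y \<Longrightarrow> symm (Y ** Y)"
  by (simp add: symm_def matrix_transpose_mul)

lemma trace_add2: "trace ((A::real^'n^'n) + B) = trace A + trace B"
  by (rule trace_add)

lemma trace_cyc: "trace ((A::real^'n^'n) ** B) = trace (B ** A)"
  by (rule trace_mul_sym)

lemma inner_mat_rows: "(A::real^'n^'m) \<bullet> A = (\<Sum>i\<in>UNIV. A$i \<bullet> A$i)"
  by (simp add: inner_vec_def)

lemma mv_bound: "(A *v (w::real^'n)) \<bullet> (A *v w) \<le> ((A::real^'n^'m) \<bullet> A) * (w \<bullet> w)"
proof -
  have "(A *v w) \<bullet> (A *v w) = (\<Sum>i\<in>UNIV. (A$i \<bullet> w)^2)"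
    by (simp add: inner_vec_def matrix_vector_mul_component power2_eq_square)
  also have "\<dots> \<le> (\<Sum>i\<in>UNIV. (A$i \<bullet> A$i) * (w \<bullet> w))"
    by (rule sum_mono) (rule Cauchy_Schwarz_ineq)
  also have "\<dots> = (A \<bullet> A) * (w \<bullet> w)"
    by (simp add: inner_mat_rows sum_distrib_right)
  finally show ?thesis .
qed

lemma norm_mv: "norm (A *v (w::real^'n)) \<le> norm (A::real^'n^'m) * norm w"
proof -
  have "norm (A *v w) ^2 \<le> (norm A * norm w)^2"
    using mv_bound[of A w] by (simp add: power2_norm_eq_inner power_mult_distrib)
  thus ?thesis by (simp add: power_mono_iff abs_le_square_iff)
qed

lemma inner_transpose_self: "transpose (B::real^'n^'m) \<bullet> transpose B = B \<bullet> B"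
  by (simp add: inner_mat_def transpose_def inner_vec_def) (rule sum.swap)

lemma norm_transpose: "norm (transpose (B::real^'n^'m)) = norm B"
  by (simp add: norm_eq_sqrt_inner inner_transpose_self)

lemma row_mult: "((A::real^'k^'m) ** B) $ i = transpose B *v (A $ i)"
  by (simp add: matrix_matrix_mult_def matrix_vector_mult_def transpose_def vec_eq_iff mult.commute)

lemma norm_mm: "norm ((A::real^'k^'m) ** (B::real^'n^'k)) \<le> norm A * norm B"
proof -
  have "(A ** B) \<bullet> (A ** B) = (\<Sum>i\<in>UNIV. (transpose B *v A$i) \<bullet> (transpose B *v A$i))"
    by (simp add: inner_mat_rows row_mult)
  also have "\<dots> \<le> (\<Sum>i\<in>UNIV. (B \<bullet> B) * (A$i \<bullet> A$i))"
    by (rule sum_mono) (metis mv_bound inner_transpose_self)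
  also have "\<dots> = (A \<bullet> A) * (B \<bullet> B)"
    by (simp add: inner_mat_rows sum_distrib_left mult.commute)
  finally have "norm (A ** B)^2 \<le> (norm A * norm B)^2"
    by (simp add: power2_norm_eq_inner power_mult_distrib)
  thus ?thesis by (simp add: power_mono_iff abs_le_square_iff)
qed

definition outer :: "real^'n \<Rightarrow> real^'n^'n" where
  "outer v = (\<chi> i k. v$i * v$k)"

lemma symm_outer[simp]: "symm (outer v)"
  by (simp add: symm_def outer_def transpose_def vec_eq_iff mult.commute)

lemma inner_outer: "w \<bullet> (Z *v w) = Z \<bullet> outer w"
  by (simp add: inner_vec_def matrix_vector_mult_def outer_def sum_distrib_left mult_ac)

lemma outer_outer: "outer w \<bullet> outer w = (w \<bullet> w)^2"
  by (simp add: inner_mat_def outer_def inner_vec_def power2_eq_square sum_distrib_left sum_distrib_right mult_ac)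

lemma outer_one: "outer w \<bullet> mat 1 = w \<bullet> w"
  by (simp add: inner_mat_def outer_def inner_vec_def mat_def if_distrib cong: if_cong)

lemma outer_quad: "x \<bullet> (outer v *v x) = (v \<bullet> x)^2"
  by (simp add: inner_vec_def matrix_vector_mult_def outer_def power2_eq_square sum_distrib_left sum_distrib_right mult_ac)


lemma symm_mv_comm: "symm P \<Longrightarrow> x \<bullet> (P *v y) = y \<bullet> (P *v (x::real^'n))"
proof -
  assume "symm P"
  hence "x v* P = P *v x" by (metis symm_def transpose_matrix_vector)
  hence "x \<bullet> (P *v y) = (P *v x) \<bullet> y" by (metis dot_lmul_matrix)
  thus ?thesis by (simp add: inner_commute)
qed

lemma discr:
  fixes a b c :: real
  assumes "\<And>t. 0 \<le> a + 2*b*t + c*t^2" "0 \<le> c"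
  shows "b^2 \<le> a*c"
proof (cases "c = 0")
  case True
  show ?thesis
  proof (cases "b = 0")
    case False
    have "0 \<le> a + 2*b*(-(a+1)/(2*b)) + c*(-(a+1)/(2*b))^2" by (rule assms(1))
    with False True show ?thesis by (simp add: field_simps)
  qed (simp add: True)
next
  case False
  hence c: "c > 0" using assms(2) by simp
  have "0 \<le> a + 2*b*(-b/c) + c*(-b/c)^2" by (rule assms(1))
  hence "0 \<le> (a*c - b^2)/c" using c by (simp add: field_simps power2_eq_square)
  thus ?thesis using c by (simp add: zero_le_divide_iff)
qed

lemma psd_CS:
  assumes "psd P"
  shows "(x \<bullet> (P *v y))^2 \<le> (x \<bullet> (P *v x)) * (y \<bullet> (P *v (y::real^'n)))"
proof -
  have s: "symm P" and q: "\<And>v. v \<bullet> (P *v v) \<ge> 0" using assms by (auto simp: psd_def)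
  have "b^2 \<le> a*c" if "a = x \<bullet> (P *v x)" "b = x \<bullet> (P *v y)" "c = y \<bullet> (P *v y)" for a b c
  proof (rule discr)
    fix t
    have "(x + t *\<^sub>R y) \<bullet> (P *v (x + t *\<^sub>R y)) = a + 2*b*t + c*t^2"
      using symm_mv_comm[OF s, of y x] that
      by (simp add: matrix_vector_right_distrib matrix_vector_mult_scaleR inner_add_left inner_add_right
          power2_eq_square algebra_simps)
    thus "0 \<le> a + 2*b*t + c*t^2" using q by metis
    show "0 \<le> c" using q that by simp
  qed
  thus ?thesis by (simp add: mult.commute)
qed

lemma posdef_psd: "posdef E \<Longrightarrow> psd E"
  unfolding posdef_def psd_def by (metis inner_zero_left matrix_vector_mult_0_right order.refl order_less_imp_le)

lemma posdef_inv:
  assumes "posdef E"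
  shows "E ** matrix_inv E = mat 1 \<and> matrix_inv E ** E = mat 1"
proof -
  have "inj ((*v) E)"
  proof -
    have "\<forall>x. E *v x = 0 \<longrightarrow> x = 0" using assms unfolding posdef_def
      by (metis inner_zero_right less_irrefl)
    thus ?thesis by (simp add: vec.inj_iff_eq_0)
  qed
  then obtain B where "B ** E = mat 1" using matrix_left_invertible_injective by blast
  hence "E ** B = mat 1 \<and> B ** E = mat 1" using matrix_left_right_inverse by blast
  hence "\<exists>B. E ** B = mat 1 \<and> B ** E = mat 1" by blast
  thus ?thesis unfolding matrix_inv_def by (rule someI_ex)
qed

lemma inv_symm_psd:
  assumes "posdef E"
  shows "symm (matrix_inv E) \<and> psd (matrix_inv E)"
proof -
  let ?P = "matrix_inv E"
  have EP: "E ** ?P = mat 1" and PE: "?P ** E = mat 1" using posdef_inv[OF assms] by auto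
  have sE: "transpose E = E" using assms by (simp add: posdef_def symm_def)
  have "E ** transpose ?P = mat 1"
    using arg_cong[OF PE, of transpose] by (simp add: matrix_transpose_mul sE)
  hence "?P ** (E ** transpose ?P) = ?P" by simp
  hence sP: "transpose ?P = ?P" by (simp add: matrix_mul_assoc PE)
  have "v \<bullet> (?P *v v) \<ge> 0" for v
  proof -
    have "v = E *v (?P *v v)" by (simp add: matrix_vector_mul_assoc EP)
    hence "v \<bullet> (?P *v v) = (E *v (?P *v v)) \<bullet> (?P *v v)" by simp
    also have "\<dots> = (?P *v v) \<bullet> (E *v (?P *v v))" by (simp add: inner_commute)
    also have "\<dots> \<ge> 0"
      using assms unfolding posdef_def
      by (metis inner_zero_left matrix_vector_mult_0_right order.refl order_less_imp_le)
    finally show ?thesis .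
  qed
  thus ?thesis using sP by (simp add: psd_def symm_def)
qed

lemma sum_outer_entry: "(\<Sum>j\<in>I. outer (V j)) $ i $ k = (\<Sum>j\<in>I. V j $ i * V j $ k)"
  by (simp add: outer_def sum_component)

lemma psd_decomp_aux:
  assumes "finite I"
  shows "\<forall>P. psd P \<and> (\<forall>i. i \<notin> I \<longrightarrow> P$i = 0) \<longrightarrow> (\<exists>V::'n \<Rightarrow> real^'n. P = (\<Sum>j\<in>I. outer (V j)))"
  using assms
proof (induction I rule: finite_induct)
  case empty
  show ?case
  proof (intro allI impI)
    fix P :: "real^'n^'n" assume "psd P \<and> (\<forall>i. i \<notin> {} \<longrightarrow> P $ i = 0)"
    hence "P = 0" by (simp add: vec_eq_iff)
    thus "\<exists>V::'n \<Rightarrow> real^'n. P = (\<Sum>j\<in>{}. outer (V j))" by simp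
  qed
next
  case (insert j I)
  show ?case
  proof (intro allI impI)
    fix P :: "real^'n^'n" assume H: "psd P \<and> (\<forall>i. i \<notin> insert j I \<longrightarrow> P $ i = 0)"
    have psdP: "psd P" and rows: "\<And>i. i \<notin> insert j I \<Longrightarrow> P $ i = 0" using H by auto
    have sP: "symm P" using psdP by (simp add: psd_def)
    have ent: "x \<bullet> (P *v axis k 1) = (\<Sum>i\<in>UNIV. x$i * P$i$k)" for x k
      by (simp add: inner_vec_def matrix_vector_mult_def axis_def if_distrib cong: if_cong)
    have diag: "axis k 1 \<bullet> (P *v axis k (1::real)) = P$k$k" for k
    proof -
      have "(\<Sum>i\<in>UNIV. (axis k 1 :: real^'n)$i * P$i$k) = (\<Sum>i\<in>UNIV. if i = k then P$i$k else 0)"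
        by (rule sum.cong) (auto simp: axis_def)
      thus ?thesis unfolding ent by simp
    qed
    have ent2: "axis k 1 \<bullet> (P *v axis j (1::real)) = P$k$j" for k j
    proof -
      have "(\<Sum>i\<in>UNIV. (axis k 1 :: real^'n)$i * P$i$j) = (\<Sum>i\<in>UNIV. if i = k then P$i$j else 0)"
        by (rule sum.cong) (auto simp: axis_def)
      thus ?thesis unfolding ent by simp
    qed
    have djj: "P$j$j \<ge> 0" using psdP diag[of j] by (simp add: psd_def) (metis)
    show "\<exists>V::'n \<Rightarrow> real^'n. P = (\<Sum>j\<in>insert j I. outer (V j))"
    proof (cases "P$j$j = 0")
      case True
      have "P$k$j = 0" for k
      proof -
        have "(axis k 1 \<bullet> (P *v axis j (1::real)))^2 \<le> (axis k 1 \<bullet> (P *v axis k 1)) * (axis j 1 \<bullet> (P *v axis j 1))"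
          by (rule psd_CS[OF psdP])
        hence "(P$k$j)^2 \<le> 0" using True by (simp only: diag ent2)
        thus ?thesis by simp
      qed
      hence "P$j = 0" using sP by (simp add: vec_eq_iff symm_entry)
      hence "\<forall>i. i \<notin> I \<longrightarrow> P$i = 0" using rows by (metis insert_iff)
      then obtain V where V: "P = (\<Sum>j\<in>I. outer (V j))" using insert.IH psdP by blast
      have e: "(\<Sum>i\<in>I. outer ((V(j:=0)) i)) = (\<Sum>i\<in>I. outer (V i))"
        by (rule sum.cong) (use insert.hyps in auto)
      have o0: "outer 0 = (0::real^'n^'n)" by (simp add: outer_def vec_eq_iff)
      have "P = (\<Sum>i\<in>insert j I. outer ((V(j := 0)) i))"
        using insert.hyps V e o0 by simp
      thus ?thesis by blast
    next
      case False
      hence pos: "P$j$j > 0" using djj by simp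
      define r where "r = sqrt (P$j$j)"
      have r: "r > 0" "r * r = P$j$j" using pos by (auto simp: r_def)
      define v where "v = (\<chi> i. P$i$j / r)"
      define P' where "P' = P - outer v"
      have vx: "v \<bullet> x = (x \<bullet> (P *v axis j 1)) / r" for x
        unfolding ent by (simp add: v_def inner_vec_def sum_divide_distrib mult.commute)
      have psdP': "psd P'"
        unfolding psd_def
      proof
        show "symm P'" using sP by (simp add: P'_def)
        show "\<forall>x. 0 \<le> x \<bullet> (P' *v x)"
        proof
          fix x
          have "(x \<bullet> (P *v axis j 1))^2 \<le> (x \<bullet> (P *v x)) * (P$j$j)"
            using psd_CS[OF psdP, of x "axis j 1"] by (simp add: diag)
          hence "(v \<bullet> x)^2 \<le> x \<bullet> (P *v x)"
          proof -
            have "(v \<bullet> x)^2 = (x \<bullet> (P *v axis j 1))^2 / P$j$j"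
              using r by (simp add: vx power_divide power2_eq_square)
            thus ?thesis using pos \<open>(x \<bullet> (P *v axis j 1))^2 \<le> (x \<bullet> (P *v x)) * (P$j$j)\<close>
              by (simp add: divide_le_eq)
          qed
          thus "0 \<le> x \<bullet> (P' *v x)"
            by (simp add: P'_def matrix_vector_mult_diff_rdistrib inner_diff_right outer_quad)
        qed
      qed
      have "\<forall>i. i \<notin> I \<longrightarrow> P'$i = 0"
      proof (intro allI impI)
        fix i assume i: "i \<notin> I"
        show "P'$i = 0"
        proof (cases "i = j")
          case True
          have "P'$j$k = 0" for k
          proof -
            have "P'$j$k = P$j$k - (P$j$j / r) * (P$k$j / r)"
              by (simp add: P'_def v_def outer_def)
            also have "\<dots> = P$j$k - P$k$j"
            proof -
              have "(P$j$j / r) * (P$k$j / r) = P$j$j * P$k$j / (r * r)" by simp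
              also have "\<dots> = P$k$j" using r pos by simp
              finally show ?thesis by simp
            qed
            also have "\<dots> = 0" using symm_entry[OF sP, of j k] by simp
            finally show ?thesis .
          qed
          thus ?thesis using True by (simp add: vec_eq_iff)
        next
          case False
          hence "P$i = 0" using rows i by auto
          thus ?thesis unfolding P'_def v_def outer_def by (simp add: vec_eq_iff)
        qed
      qed
      then obtain V where V: "P' = (\<Sum>j\<in>I. outer (V j))" using insert.IH psdP' by blast
      have "P = outer v + P'" by (simp add: P'_def)
      also have "\<dots> = (\<Sum>i\<in>insert j I. outer ((V(j := v)) i))"
      proof -
        have e: "(\<Sum>i\<in>I. outer ((V(j:=v)) i)) = (\<Sum>i\<in>I. outer (V i))"
          by (rule sum.cong) (use insert.hyps in auto)
        show ?thesis using insert.hyps V e by simp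
      qed
      finally show ?thesis by blast
    qed
  qed
qed

lemma psd_factor:
  assumes "psd (P::real^'n^'n)"
  shows "\<exists>L::real^'n^'n. L ** transpose L = P"
proof -
  obtain V :: "'n \<Rightarrow> real^'n" where V: "P = (\<Sum>j\<in>UNIV. outer (V j))"
    using psd_decomp_aux[of UNIV] assms by auto
  define L where "L = (\<chi> i j. V j $ i)"
  have "L ** transpose L = P"
    by (simp add: V L_def matrix_matrix_mult_def transpose_def vec_eq_iff sum_component outer_def)
  thus ?thesis by blast
qed


locale hatc =
  fixes E L :: "real^'n^'n"
  assumes sE: "symm E"
    and PE: "L ** transpose L ** E = mat 1"
    and EP: "E ** L ** transpose L = mat 1"
    and LEL: "transpose L ** E ** L = mat 1"
    and Pdef: "matrix_inv E = L ** transpose L"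
begin

lemma PE': "X ** L ** transpose L ** E = X"
  using PE by (metis matrix_mul_assoc matrix_mul_rid)
lemma EP': "X ** E ** L ** transpose L = X"
  using EP by (metis matrix_mul_assoc matrix_mul_rid)
lemma LEL': "X ** transpose L ** E ** L = X"
  using LEL by (metis matrix_mul_assoc matrix_mul_rid)

lemmas canc = PE EP LEL PE' EP' LEL'

definition h :: "real^'n^'n \<Rightarrow> real^'n^'n" where "h Y = transpose L ** Y ** L"
definition k :: "real^'n^'n \<Rightarrow> real^'n^'n" where "k S = transpose L ** E ** S ** E ** L"

lemma h_add: "h (Y + Z) = h Y + h Z"
  by (simp add: h_def matrix_add_ldistrib matrix_add_rdistrib)
lemma h_diff: "h (Y - Z) = h Y - h Z"
  by (simp add: h_def matrix_diff_ldistrib matrix_diff_rdistrib)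
lemma h_scale: "h (c *\<^sub>R Y) = c *\<^sub>R h Y"
  by (simp add: h_def matrix_scalar_ac scalar_matrix_assoc)
lemma h_E: "h E = mat 1"
  by (simp add: h_def LEL)
lemma k_add: "k (Y + Z) = k Y + k Z"
  by (simp add: k_def matrix_add_ldistrib matrix_add_rdistrib)
lemma k_diff: "k (Y - Z) = k Y - k Z"
  by (simp add: k_def matrix_diff_ldistrib matrix_diff_rdistrib)
lemma k_scale: "k (c *\<^sub>R Y) = c *\<^sub>R k Y"
  by (simp add: k_def matrix_scalar_ac scalar_matrix_assoc)

lemma h_symm: "symm Y \<Longrightarrow> symm (h Y)"
  by (simp add: h_def symm_congr)
lemma k_symm: "symm S \<Longrightarrow> symm (k S)"
  using sE by (simp add: k_def symm_def matrix_transpose_mul matrix_mul_assoc)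

lemma S_rec: "L ** k S ** transpose L = S"
  by (simp add: k_def matrix_mul_assoc canc)
lemma k_rec: "k (L ** M ** transpose L) = M"
  by (simp add: k_def matrix_mul_assoc canc)
lemma Y_rec: "E ** L ** h Y ** transpose L ** E = Y"
  by (simp add: h_def matrix_mul_assoc canc)
lemma h_rec: "h (E ** L ** M ** transpose L ** E) = M"
  by (simp add: h_def matrix_mul_assoc canc)

lemma tr_P: "trace (matrix_inv E ** Y) = trace (h Y)"
proof -
  have "trace (matrix_inv E ** Y) = trace (L ** (transpose L ** Y))"
    by (simp add: Pdef matrix_mul_assoc)
  also have "\<dots> = trace (transpose L ** Y ** L)" by (rule trace_cyc)
  finally show ?thesis by (simp add: h_def)
qed

lemma tr_PP: "trace ((matrix_inv E ** Y) ** (matrix_inv E ** Y)) = trace (h Y ** h Y)"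
proof -
  have "trace ((matrix_inv E ** Y) ** (matrix_inv E ** Y)) = trace (L ** (transpose L ** Y ** L ** transpose L ** Y))"
    by (simp add: Pdef matrix_mul_assoc)
  also have "\<dots> = trace (transpose L ** Y ** L ** transpose L ** Y ** L)"
    by (subst trace_cyc) (simp add: matrix_mul_assoc)
  finally show ?thesis by (simp add: h_def matrix_mul_assoc)
qed

lemma normE_h: "symm Y \<Longrightarrow> normE E Y = norm (h Y)"
  by (simp add: normE_def tr_PP trace_symm_inner h_symm norm_eq_sqrt_inner)

lemma tr_SY: "trace (S ** Y) = trace (k S ** h Y)"
proof -
  have "trace (k S ** h Y) = trace (transpose L ** (E ** S ** Y ** L))"
    by (simp add: k_def h_def matrix_mul_assoc canc)
  also have "\<dots> = trace (E ** (S ** Y ** L ** transpose L))"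
    by (subst trace_cyc) (simp add: matrix_mul_assoc)
  also have "\<dots> = trace (S ** Y ** L ** transpose L ** E)"
    by (subst trace_cyc) (simp add: matrix_mul_assoc)
  also have "\<dots> = trace (S ** Y)" by (simp add: canc)
  finally show ?thesis by simp
qed

lemma tr_FS: "trace (F ** S) = trace (h F ** k S)"
proof -
  have "trace (h F ** k S) = trace (transpose L ** (F ** S ** E ** L))"
    by (simp add: k_def h_def matrix_mul_assoc canc)
  also have "\<dots> = trace (F ** S ** E ** L ** transpose L)"
    by (subst trace_cyc) (simp add: matrix_mul_assoc)
  also have "\<dots> = trace (F ** S)" by (simp add: canc)
  finally show ?thesis by simp
qed

lemma tr_FSFS: "trace ((F ** S) ** (F ** S)) = trace ((h F ** k S) ** (h F ** k S))"
proof -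
  have "trace ((h F ** k S) ** (h F ** k S)) = trace (transpose L ** (F ** S ** F ** S ** E ** L))"
    by (simp add: k_def h_def matrix_mul_assoc canc)
  also have "\<dots> = trace (F ** S ** F ** S ** E ** L ** transpose L)"
    by (subst trace_cyc) (simp add: matrix_mul_assoc)
  also have "\<dots> = trace ((F ** S) ** (F ** S))" by (simp add: canc matrix_mul_assoc)
  finally show ?thesis by simp
qed

lemma posdef_h: "symm F \<Longrightarrow> posdef (h F) \<Longrightarrow> posdef F"
  unfolding posdef_def
proof (intro conjI allI impI)
  assume sF: "symm F" and H: "symm (h F) \<and> (\<forall>v. v \<noteq> 0 \<longrightarrow> 0 < v \<bullet> (h F *v v))"
  show "symm F" by fact
  fix v :: "real^'n" assume v: "v \<noteq> 0"
  define w where "w = (transpose L ** E) *v v"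
  have vw: "v = L *v w"
    by (simp add: w_def matrix_vector_mul_assoc matrix_mul_assoc canc)
  hence "w \<noteq> 0" using v by auto
  hence "0 < w \<bullet> (h F *v w)" using H by blast
  also have "w \<bullet> (h F *v w) = (L *v w) \<bullet> (F *v (L *v w))"
  proof -
    have "h F *v w = transpose L *v (F *v (L *v w))"
      by (simp only: h_def matrix_vector_mul_assoc matrix_mul_assoc)
    hence "h F *v w = (F *v (L *v w)) v* L" by simp
    hence "w \<bullet> (h F *v w) = ((F *v (L *v w)) v* L) \<bullet> w"
      by (simp add: inner_commute)
    also have "\<dots> = (F *v (L *v w)) \<bullet> (L *v w)" by (rule dot_lmul_matrix)
    finally show ?thesis by (simp add: inner_commute)
  qed
  finally show "0 < v \<bullet> (F *v v)" using vw by simp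
qed

end

lemma hatc_exists:
  fixes E :: "real^'n^'n"
  assumes "posdef E"
  shows "\<exists>L. hatc E L"
proof -
  obtain L :: "real^'n^'n" where L: "L ** transpose L = matrix_inv E"
    using psd_factor inv_symm_psd[OF assms] by blast
  have EP: "E ** matrix_inv E = mat 1" and PE: "matrix_inv E ** E = mat 1"
    using posdef_inv[OF assms] by auto
  have "L ** (transpose L ** E) = mat 1" using PE L by (simp add: matrix_mul_assoc)
  hence "transpose L ** E ** L = mat 1" using matrix_left_right_inverse by blast
  moreover have "symm E" using assms by (simp add: posdef_def)
  ultimately have "hatc E L" unfolding hatc_def using L EP PE by (simp add: matrix_mul_assoc[symmetric])
  thus ?thesis by blast
qed


lemma circ_dual:
  fixes a v w :: "'a::real_inner"
  assumes ww: "w \<bullet> w = n" and n: "n > 0" and b0: "0 \<le> \<beta>" and bn: "\<beta>^2 \<le> n"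
    and ha: "a \<bullet> w \<ge> sqrt (n - \<beta>^2) * norm a" and hv: "v \<bullet> w \<ge> \<beta> * norm v"
  shows "a \<bullet> v \<ge> 0"
proof -
  define A where "A = a \<bullet> w"
  define V where "V = v \<bullet> w"
  define r where "r = a \<bullet> a"
  define Y where "Y = v \<bullet> v"
  define a' where "a' = a - (A / n) *\<^sub>R w"
  define v' where "v' = v - (V / n) *\<^sub>R w"
  have A0: "A \<ge> 0" using ha unfolding A_def by (meson order_trans mult_nonneg_nonneg norm_ge_zero real_sqrt_ge_zero bn diff_ge_0_iff_ge)
  have V0: "V \<ge> 0" using hv b0 unfolding V_def by (meson order_trans mult_nonneg_nonneg norm_ge_zero)
  have dec: "a \<bullet> v = A * V / n + a' \<bullet> v'"
    using n unfolding a'_def v'_def A_def V_def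
    by (simp add: inner_diff_left inner_diff_right ww inner_commute field_simps power2_eq_square)
  have aa: "a' \<bullet> a' = r - A^2 / n"
    using n unfolding a'_def A_def r_def
    by (simp add: inner_diff_left inner_diff_right ww inner_commute field_simps power2_eq_square)
  have vv: "v' \<bullet> v' = Y - V^2 / n"
    using n unfolding v'_def V_def Y_def
    by (simp add: inner_diff_left inner_diff_right ww inner_commute field_simps power2_eq_square)
  have A2: "A^2 \<ge> (n - \<beta>^2) * r"
  proof -
    have "(sqrt (n - \<beta>^2) * norm a)^2 \<le> A^2"
      using ha A0 unfolding A_def
      by (meson mult_nonneg_nonneg norm_ge_zero power_mono real_sqrt_ge_zero bn diff_ge_0_iff_ge)
    thus ?thesis using bn by (simp add: power_mult_distrib r_def power2_norm_eq_inner)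
  qed
  have V2: "V^2 \<ge> \<beta>^2 * Y"
  proof -
    have "(\<beta> * norm v)^2 \<le> V^2"
      using hv b0 unfolding V_def by (meson mult_nonneg_nonneg norm_ge_zero power_mono)
    thus ?thesis by (simp add: power_mult_distrib Y_def power2_norm_eq_inner)
  qed
  have r0: "r \<ge> 0" "Y \<ge> 0" by (auto simp: r_def Y_def)
  have key: "(r - A^2/n) * (Y - V^2/n) \<le> (A * V / n)^2"
  proof -
    have "r * (V^2/n) + (A^2/n) * Y \<ge> r * (\<beta>^2 * Y / n) + ((n - \<beta>^2) * r / n) * Y"
      using A2 V2 r0 n by (intro add_mono mult_left_mono mult_right_mono divide_right_mono) auto
    also have "r * (\<beta>^2 * Y / n) + ((n - \<beta>^2) * r / n) * Y = r * Y"
      using n by (simp add: field_simps)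
    finally have "r * (V^2/n) + (A^2/n) * Y \<ge> r * Y" .
    moreover have "(r - A^2/n) * (Y - V^2/n) = (A*V/n)^2 + (r*Y - (r*(V^2/n) + (A^2/n)*Y))"
      using n by (simp add: field_simps power2_eq_square)
    ultimately show ?thesis by linarith
  qed
  show ?thesis
  proof (cases "a' \<bullet> v' \<ge> 0")
    case True thus ?thesis using dec A0 V0 n by simp
  next
    case False
    have "(a' \<bullet> v')^2 \<le> (a' \<bullet> a') * (v' \<bullet> v')" by (rule Cauchy_Schwarz_ineq)
    also have "\<dots> \<le> (A * V / n)^2" using key aa vv by simp
    finally have "\<bar>a' \<bullet> v'\<bar> \<le> \<bar>A * V / n\<bar>" by (simp only: abs_le_square_iff)
    thus ?thesis using dec A0 V0 n False by simp
  qed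
qed

lemma pd_trace:
  fixes N :: "real^'n^'n"
  assumes sN: "symm N" and a: "N \<bullet> mat 1 > 0"
    and h: "(real CARD('n) - 1) * (N \<bullet> N) < (N \<bullet> mat 1)^2"
    and u: "u \<bullet> u = 1"
  shows "u \<bullet> (N *v u) > 0"
proof -
  define n where "n = real CARD('n)"
  define a where "a = N \<bullet> mat 1"
  have n: "n \<ge> 1" unfolding n_def by simp
  define W where "W = outer u - (1/n) *\<^sub>R mat 1"
  define M where "M = N - (a/n) *\<^sub>R mat 1"
  have I1: "mat 1 \<bullet> (mat 1::real^'n^'n) = n" by (simp add: inner_one_one n_def)
  have Io: "mat 1 \<bullet> outer u = 1" using outer_one[of u] u by (simp add: inner_commute)
  have oo: "outer u \<bullet> outer u = 1" using outer_outer[of u] u by simp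
  have q: "u \<bullet> (N *v u) = N \<bullet> outer u" by (rule inner_outer)
  have MW: "M \<bullet> W = N \<bullet> outer u - a/n"
    using n unfolding M_def W_def a_def
    by (simp add: inner_diff_left inner_diff_right I1 Io inner_commute field_simps)
  have MM: "M \<bullet> M = N \<bullet> N - a^2/n"
    using n unfolding M_def a_def
    by (simp add: inner_diff_left inner_diff_right I1 inner_commute field_simps power2_eq_square)
  have WW: "W \<bullet> W = 1 - 1/n"
    using n unfolding W_def
    by (simp add: inner_diff_left inner_diff_right I1 Io oo inner_commute field_simps)
  have a0: "a > 0" using assms by (simp add: a_def)
  have hh: "(n - 1) * (N \<bullet> N) < a^2" using h by (simp add: n_def a_def)
  have "(M \<bullet> W)^2 < (a/n)^2"
  proof -
    have "(M \<bullet> W)^2 \<le> (M \<bullet> M) * (W \<bullet> W)" by (rule Cauchy_Schwarz_ineq)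
    also have "\<dots> = (N \<bullet> N - a^2/n) * (1 - 1/n)" by (simp add: MM WW)
    also have "\<dots> < (a/n)^2"
    proof -
      have "(N \<bullet> N - a^2/n) * (1 - 1/n) * n^2 = (n-1) * (N \<bullet> N) * n - (n-1) * a^2"
        using n by (simp add: field_simps power2_eq_square)
      also have "\<dots> < a^2 * n - (n-1) * a^2"
        using hh n by (simp add: mult_strict_right_mono)
      also have "\<dots> = (a/n)^2 * n^2" using n by (simp add: field_simps power2_eq_square)
      finally show ?thesis using n by simp
    qed
    finally show ?thesis .
  qed
  hence "\<bar>M \<bullet> W\<bar> < a/n"
    using a0 n power2_less_imp_less[of "\<bar>M \<bullet> W\<bar>" "a/n"] by simp
  thus ?thesis using q MW by simp
qed


lemma mv_scale: "(c *\<^sub>R A) *v (v::real^'n) = c *\<^sub>R ((A::real^'n^'m) *v v)"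
  by (simp add: scaleR_matrix_vector_assoc)

lemma pfacts:
  fixes X :: "real^'n^'n"
  assumes sX: "symm X" and XX: "X \<bullet> X = 1"
  shows "X \<bullet> (X ** X) \<le> 1" "(X ** X) \<bullet> (X ** X) \<le> 1" "(X \<bullet> (X ** X))^2 \<le> (X ** X) \<bullet> (X ** X)"
proof -
  have nX: "norm X = 1" using XX by (simp add: norm_eq_sqrt_inner)
  have nXX: "norm (X ** X) \<le> 1" using norm_mm[of X X] nX by simp
  show "X \<bullet> (X ** X) \<le> 1" using norm_cauchy_schwarz[of X "X ** X"] nX nXX by simp
  show "(X ** X) \<bullet> (X ** X) \<le> 1"
    using nXX by (metis norm_eq_sqrt_inner real_sqrt_le_1_iff)
  show "(X \<bullet> (X ** X))^2 \<le> (X ** X) \<bullet> (X ** X)"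
    using Cauchy_Schwarz_ineq[of X "X ** X"] XX by simp
qed

lemma hat_pd:
  fixes X :: "real^'n^'n"
  assumes sX: "symm X" and XX: "X \<bullet> X = 1" and a: "0 < \<alpha>" "\<alpha> < 1" and s: "0 \<le> s"
    and hN: "\<And>u. u \<bullet> u = 1 \<Longrightarrow> u \<bullet> (N *v u) > 0"
    and Ndef: "N = mat 1 + (s - \<alpha>) *\<^sub>R X + (- (s*\<alpha>)) *\<^sub>R (X ** X)"
  shows "posdef (mat 1 + s *\<^sub>R X)"
  unfolding posdef_def
proof (intro conjI allI impI)
  show "symm (mat 1 + s *\<^sub>R X)" using sX by simp
  fix v :: "real^'n" assume v: "v \<noteq> 0"
  define c where "c = v \<bullet> v"
  define x where "x = v \<bullet> (X *v v)"
  define w where "w = (X *v v) \<bullet> (X *v v)"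
  have c: "c > 0" using v by (simp add: c_def)
  have e1: "v \<bullet> ((mat 1 + s *\<^sub>R X) *v v) = c + s * x"
    by (simp add: c_def x_def matrix_vector_mult_add_rdistrib mv_scale inner_add_right)
  have vXXv: "v \<bullet> ((X ** X) *v v) = w"
    using symm_mv_comm[OF sX, of v "X *v v"] by (simp add: w_def matrix_vector_mul_assoc[symmetric])
  have e2: "v \<bullet> (N *v v) = c + (s - \<alpha>) * x - s * \<alpha> * w"
    by (simp add: Ndef c_def x_def matrix_vector_mult_add_rdistrib matrix_vector_mult_diff_rdistrib
        mv_scale inner_add_right inner_diff_right vXXv)
  have cw: "x^2 \<le> c * w" unfolding x_def c_def w_def by (rule Cauchy_Schwarz_ineq)
  have "x^2 \<le> c^2"
  proof -
    have "x = X \<bullet> outer v" by (simp add: x_def inner_outer)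
    hence "x^2 \<le> (X \<bullet> X) * (outer v \<bullet> outer v)" by (metis Cauchy_Schwarz_ineq)
    thus ?thesis by (simp add: XX outer_outer c_def)
  qed
  hence xc: "\<bar>x\<bar> \<le> c" using c by (simp add: abs_le_square_iff[symmetric])
  have pos: "v \<bullet> (N *v v) > 0"
  proof -
    define u where "u = (1 / sqrt c) *\<^sub>R v"
    have "u \<bullet> u = 1" using c by (simp add: u_def c_def[symmetric])
    hence "u \<bullet> (N *v u) > 0" by (rule hN)
    moreover have "u \<bullet> (N *v u) = (v \<bullet> (N *v v)) / c"
    proof -
      have "u \<bullet> (N *v u) = (v \<bullet> (N *v v)) / (sqrt c * sqrt c)"
        by (simp add: u_def matrix_scaleR_vector_ac inner_scaleR_left mv_scale)
      thus ?thesis using c by simp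
    qed
    ultimately show ?thesis using c by (simp add: zero_less_divide_iff)
  qed
  show "0 < v \<bullet> ((mat 1 + s *\<^sub>R X) *v v)"
  proof (rule ccontr)
    assume "\<not> ?thesis"
    hence neg: "c + s * x \<le> 0" using e1 by simp
    have sa: "s * \<alpha> \<ge> 0" using s a by simp
    have "s * \<alpha> * x^2 \<le> s * \<alpha> * (c * w)" using cw sa by (rule mult_left_mono)
    hence "c * (v \<bullet> (N *v v)) \<le> (c + s * x) * (c - \<alpha> * x)"
      by (simp add: e2 algebra_simps power2_eq_square)
    also have "\<dots> \<le> 0"
    proof (rule mult_nonpos_nonneg[OF neg])
      have "\<alpha> * x \<le> \<alpha> * c" using xc a by (simp add: mult_left_mono abs_le_iff)
      thus "0 \<le> c - \<alpha> * x" using a c by (smt (verit) mult_less_cancel_right1)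
    qed
    finally have "c * (v \<bullet> (N *v v)) \<le> 0" .
    thus False using c pos by (simp add: mult_le_0_iff)
  qed
qed

lemma N_prod:
  fixes X :: "real^'n^'n"
  shows "(mat 1 + s *\<^sub>R X) ** (mat 1 + (- \<alpha>) *\<^sub>R X) = mat 1 + (s - \<alpha>) *\<^sub>R X + (- (s*\<alpha>)) *\<^sub>R (X ** X)"
  by (simp add: matrix_add_ldistrib matrix_add_rdistrib matrix_diff_ldistrib matrix_diff_rdistrib
      matrix_scalar_ac scalar_matrix_assoc[symmetric] algebra_simps)

lemma N_inner:
  fixes X :: "real^'n^'n"
  assumes sX: "symm X" and XX: "X \<bullet> X = 1" and tX: "X \<bullet> mat 1 = \<alpha>"
    and Ndef: "N = mat 1 + (s - \<alpha>) *\<^sub>R X + (- (s*\<alpha>)) *\<^sub>R (X ** X)"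
  shows "N \<bullet> mat 1 = real CARD('n) - \<alpha>^2"
    "N \<bullet> N = real CARD('n) - \<alpha>^2 + (1 - 2*\<alpha>*(X \<bullet> (X ** X)) + \<alpha>^2 * ((X ** X) \<bullet> (X ** X))) * s^2
        - 2 * \<alpha> * (1 - \<alpha> * (X \<bullet> (X ** X))) * s"
proof -
  have t2: "(X ** X) \<bullet> mat 1 = 1"
    using trace_symm_inner[OF sX, of X] trace_inner_one[of "X ** X"] XX by simp
  have I1: "mat 1 \<bullet> (mat 1::real^'n^'n) = real CARD('n)" by (rule inner_one_one)
  have t2': "mat 1 \<bullet> (X ** X) = 1" using t2 by (simp add: inner_commute)
  have tX': "mat 1 \<bullet> X = \<alpha>" using tX by (simp add: inner_commute)
  show "N \<bullet> mat 1 = real CARD('n) - \<alpha>^2"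
    by (simp add: Ndef inner_add_left inner_diff_left t2 tX I1 algebra_simps power2_eq_square)
  show "N \<bullet> N = real CARD('n) - \<alpha>^2 + (1 - 2*\<alpha>*(X \<bullet> (X ** X)) + \<alpha>^2 * ((X ** X) \<bullet> (X ** X))) * s^2
        - 2 * \<alpha> * (1 - \<alpha> * (X \<bullet> (X ** X))) * s"
    by (simp add: Ndef inner_add_left inner_add_right inner_diff_left inner_diff_right t2 tX t2' tX' I1 XX inner_commute algebra_simps power2_eq_square)
qed

lemma alg1: "((a::real) * n + e * t)^2 - a^2 * (n^2 + 2 * e * x + e^2 * d)
          = 2 * e * a * (t * n - a * x) + e^2 * t^2 - e^2 * a^2 * d"
  by algebra

lemma LF1:
  fixes X D :: "real^'n^'n"
  assumes nu: "norm X > 0" and tX: "trace X = \<alpha> * norm X" and a: "\<alpha> > 0"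
    and g: "trace D - (\<alpha> / norm X) * (X \<bullet> D) > 0"
  shows "\<exists>\<epsilon>>0. trace (X + \<epsilon> *\<^sub>R D) \<ge> \<alpha> * norm (X + \<epsilon> *\<^sub>R D)"
proof -
  define \<nu> where "\<nu> = norm X"
  define \<tau> where "\<tau> = trace D"
  define d where "d = D \<bullet> D"
  define gg where "gg = trace D - (\<alpha> / norm X) * (X \<bullet> D)"
  have nu0: "\<nu> > 0" using nu by (simp add: \<nu>_def)
  have g0: "gg > 0" using g by (simp add: gg_def)
  have d0: "d \<ge> 0" by (simp add: d_def)
  define \<epsilon> where "\<epsilon> = min (\<alpha> * \<nu> / (\<bar>\<tau>\<bar> + 1)) (2 * \<nu> * gg / (\<alpha> * d + 1))"
  have ad: "\<alpha> * d + 1 > 0" using a d0 by (simp add: add_nonneg_pos)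
  have e0: "\<epsilon> > 0" using a nu0 g0 ad by (simp add: \<epsilon>_def)
  have e1: "\<epsilon> * (\<bar>\<tau>\<bar> + 1) \<le> \<alpha> * \<nu>"
    using a nu0 by (simp add: \<epsilon>_def pos_le_divide_eq[symmetric])
  have e2: "\<epsilon> * (\<alpha> * d + 1) \<le> 2 * \<nu> * gg"
    using a nu0 d0 by (simp add: \<epsilon>_def pos_le_divide_eq[symmetric] add_nonneg_pos)
  have L0: "\<alpha> * \<nu> + \<epsilon> * \<tau> \<ge> 0"
  proof -
    have "\<epsilon> * \<bar>\<tau>\<bar> \<le> \<alpha> * \<nu>" using e1 e0 by (simp add: algebra_simps)
    moreover have "- (\<epsilon> * \<bar>\<tau>\<bar>) \<le> \<epsilon> * \<tau>"
    proof -
      have "\<epsilon> * (-\<tau>) \<le> \<epsilon> * \<bar>\<tau>\<bar>" using e0 by (intro mult_left_mono) auto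
      thus ?thesis by simp
    qed
    ultimately show ?thesis by linarith
  qed
  have nrm: "norm (X + \<epsilon> *\<^sub>R D)^2 = \<nu>^2 + 2 * \<epsilon> * (X \<bullet> D) + \<epsilon>^2 * d"
  proof -
    have "norm (X + \<epsilon> *\<^sub>R D)^2 = (X + \<epsilon> *\<^sub>R D) \<bullet> (X + \<epsilon> *\<^sub>R D)" by (rule power2_norm_eq_inner)
    moreover have "\<nu>^2 = X \<bullet> X" by (simp add: \<nu>_def power2_norm_eq_inner)
    ultimately show ?thesis
      by (simp add: inner_add_left inner_add_right d_def inner_commute power2_eq_square algebra_simps)
  qed
  have ggv: "gg * \<nu> = \<tau> * \<nu> - \<alpha> * (X \<bullet> D)" using nu0 by (simp add: gg_def \<tau>_def \<nu>_def field_simps)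
  have "(\<alpha> * norm (X + \<epsilon> *\<^sub>R D))^2 \<le> (\<alpha> * \<nu> + \<epsilon> * \<tau>)^2"
  proof -
    have "(\<alpha> * \<nu> + \<epsilon> * \<tau>)^2 - (\<alpha> * norm (X + \<epsilon> *\<^sub>R D))^2
        = 2 * \<epsilon> * \<alpha> * (gg * \<nu>) + \<epsilon>^2 * \<tau>^2 - \<epsilon>^2 * \<alpha>^2 * d"
    proof -
      have eqA: "(\<alpha> * norm (X + \<epsilon> *\<^sub>R D))^2 = \<alpha>^2 * (\<nu>^2 + 2 * \<epsilon> * (X \<bullet> D) + \<epsilon>^2 * d)"
        by (simp only: power_mult_distrib nrm)
      have eqB: "(\<alpha> * \<nu> + \<epsilon> * \<tau>)^2 - \<alpha>^2 * (\<nu>^2 + 2 * \<epsilon> * (X \<bullet> D) + \<epsilon>^2 * d)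
          = 2 * \<epsilon> * \<alpha> * (\<tau> * \<nu> - \<alpha> * (X \<bullet> D)) + \<epsilon>^2 * \<tau>^2 - \<epsilon>^2 * \<alpha>^2 * d"
        by (rule alg1)
      have eqC: "\<tau> * \<nu> - \<alpha> * (X \<bullet> D) = gg * \<nu>" using ggv by simp
      show ?thesis unfolding eqA using eqB[unfolded eqC] by simp
    qed
    also have "\<dots> \<ge> 0"
    proof -
      have "\<epsilon> * (\<alpha> * d) \<le> 2 * \<nu> * gg" using e2 e0 by (simp add: algebra_simps)
      hence "\<epsilon> * \<alpha> * (\<epsilon> * (\<alpha> * d)) \<le> \<epsilon> * \<alpha> * (2 * \<nu> * gg)"
        using e0 a by (intro mult_left_mono) auto
      moreover have "\<epsilon>^2 * \<tau>^2 \<ge> 0" by simp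
      ultimately show ?thesis by (simp add: algebra_simps power2_eq_square)
    qed
    finally show ?thesis by simp
  qed
  hence "\<alpha> * norm (X + \<epsilon> *\<^sub>R D) \<le> \<alpha> * \<nu> + \<epsilon> * \<tau>"
    using L0 by (rule power2_le_imp_le)
  moreover have "trace (X + \<epsilon> *\<^sub>R D) = \<alpha> * \<nu> + \<epsilon> * \<tau>"
    by (simp add: trace_add trace_scaleR tX \<nu>_def \<tau>_def)
  ultimately show ?thesis using e0 by auto
qed

lemma LF2:
  fixes X D :: "real^'n^'n"
  assumes gap: "trace X > \<alpha> * norm X" and a: "\<alpha> \<ge> 0"
  shows "\<exists>\<epsilon>>0. trace (X + \<epsilon> *\<^sub>R D) \<ge> \<alpha> * norm (X + \<epsilon> *\<^sub>R D)
              \<and> trace (X + (-\<epsilon>) *\<^sub>R D) \<ge> \<alpha> * norm (X + (-\<epsilon>) *\<^sub>R D)"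
proof -
  define \<gamma> where "\<gamma> = trace X - \<alpha> * norm X"
  define \<epsilon> where "\<epsilon> = \<gamma> / (\<bar>trace D\<bar> + \<alpha> * norm D + 1)"
  have g0: "\<gamma> > 0" using gap by (simp add: \<gamma>_def)
  have den: "\<bar>trace D\<bar> + \<alpha> * norm D + 1 > 0" using a by (simp add: add_nonneg_pos)
  have e0: "\<epsilon> > 0" using g0 den by (simp add: \<epsilon>_def)
  have eb: "\<epsilon> * (\<bar>trace D\<bar> + \<alpha> * norm D) \<le> \<gamma>"
  proof -
    have "\<epsilon> * (\<bar>trace D\<bar> + \<alpha> * norm D + 1) = \<gamma>" using den by (simp add: \<epsilon>_def)
    thus ?thesis using e0 by (simp add: algebra_simps)
  qed
  have main: "trace (X + c *\<^sub>R D) \<ge> \<alpha> * norm (X + c *\<^sub>R D)" if c: "\<bar>c\<bar> = \<epsilon>" for c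
  proof -
    have "norm (X + c *\<^sub>R D) \<le> norm X + \<epsilon> * norm D"
      using norm_triangle_ineq[of X "c *\<^sub>R D"] c by simp
    hence "\<alpha> * norm (X + c *\<^sub>R D) \<le> \<alpha> * norm X + \<alpha> * (\<epsilon> * norm D)"
      using a by (metis distrib_left mult_left_mono)
    moreover have "trace (X + c *\<^sub>R D) \<ge> trace X - \<epsilon> * \<bar>trace D\<bar>"
    proof -
      have "\<bar>c * trace D\<bar> = \<epsilon> * \<bar>trace D\<bar>" using c by (simp add: abs_mult)
      thus ?thesis by (simp add: trace_add trace_scaleR)
    qed
    ultimately show ?thesis using eb \<gamma>_def by (simp add: algebra_simps)
  qed
  show ?thesis using e0 main[of \<epsilon>] main[of "-\<epsilon>"] by auto
qed


lemma quad_strict: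
  fixes a b c :: real
  assumes a: "a > 0"
  shows "strict_convex_on UNIV (\<lambda>t. a * t^2 + b * t + c)"
  unfolding strict_convex_on_def
proof (intro conjI ballI allI impI)
  show "convex (UNIV::real set)" by simp
  fix x y u v :: real
  assume "x \<noteq> y" "u > 0" "v > 0" "u + v = 1"
  hence v: "v = 1 - u" and u: "0 < u" "u < 1" and xy: "(x - y)^2 > 0" by auto
  have "u * (a * x\<^sup>2 + b * x + c) + v * (a * y\<^sup>2 + b * y + c) - (a * (u * x + v * y)\<^sup>2 + b * (u * x + v * y) + c)
      = a * (u * (1 - u)) * (x - y)^2"
    by (simp add: v algebra_simps power2_eq_square)
  also have "\<dots> > 0" using a u xy by simp
  finally show "a * (u * x + v * y)\<^sup>2 + b * (u * x + v * y) + c < u * (a * x\<^sup>2 + b * x + c) + v * (a * y\<^sup>2 + b * y + c)"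
    by simp
qed

lemma quad_min:
  fixes a b c :: real
  assumes a: "a > 0"
  shows "(\<forall>t. a * t0^2 + b * t0 + c \<le> a * t^2 + b * t + c) \<longleftrightarrow> t0 = - b / (2 * a)"
proof
  assume H: "\<forall>t. a * t0^2 + b * t0 + c \<le> a * t^2 + b * t + c"
  define t1 where "t1 = - b / (2 * a)"
  have "a * t0^2 + b * t0 + c - (a * t1^2 + b * t1 + c) = a * (t0 - t1)^2"
    using a by (simp add: t1_def field_simps power2_eq_square)
  moreover have "a * t0^2 + b * t0 + c \<le> a * t1^2 + b * t1 + c" using H by blast
  ultimately have "a * (t0 - t1)^2 \<le> 0" by linarith
  hence "(t0 - t1)^2 \<le> 0" using a by (simp add: mult_le_0_iff)
  thus "t0 = - b / (2 * a)" by (simp add: t1_def)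
next
  assume t0: "t0 = - b / (2 * a)"
  show "\<forall>t. a * t0^2 + b * t0 + c \<le> a * t^2 + b * t + c"
  proof
    fix t
    have "a * t^2 + b * t + c - (a * t0^2 + b * t0 + c) = a * (t - t0)^2"
      using a by (simp add: t0 field_simps power2_eq_square)
    moreover have "a * (t - t0)^2 \<ge> 0" using a by simp
    ultimately show "a * t0^2 + b * t0 + c \<le> a * t^2 + b * t + c" by linarith
  qed
qed

lemma trace_zero[simp]: "trace (0::real^'n^'n) = 0"
  by (simp add: trace_def)

lemma opA_add: "opA A (X + Y) = opA A X + opA A Y"
  by (simp add: opA_def vec_eq_iff matrix_add_ldistrib trace_add)
lemma opA_diff: "opA A (X - Y) = opA A X - opA A Y"
  by (simp add: opA_def vec_eq_iff matrix_diff_ldistrib trace_sub)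
lemma opA_scale: "opA A (c *\<^sub>R X) = c *\<^sub>R opA A X"
  by (simp add: opA_def vec_eq_iff matrix_scalar_ac scalar_matrix_assoc[symmetric] trace_scaleR)
lemma opA_zero: "opA A 0 = 0"
  by (simp add: opA_def vec_eq_iff trace_0[unfolded mat_0])

lemma trace_lin: "trace (M ** (X + c *\<^sub>R D)) = trace (M ** X) + c * trace (M ** (D::real^'n^'n))"
  by (simp add: matrix_add_ldistrib matrix_scalar_ac scalar_matrix_assoc[symmetric] trace_add trace_scaleR)

lemma trace_sum_left: "trace ((\<Sum>i\<in>I. f i) ** (X::real^'n^'n)) = (\<Sum>i\<in>I. trace (f i ** X))"
  by (induction I rule: infinite_finite_induct) (simp_all add: matrix_add_rdistrib trace_add)

lemma opAadj_trace:
  fixes A :: "'m::finite \<Rightarrow> real^'n^'n"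
  shows "y \<bullet> opA A X = trace (opAadj A y ** X)"
proof -
  have "trace (opAadj A y ** X) = (\<Sum>i\<in>UNIV. trace ((y$i *\<^sub>R A i) ** X))"
    unfolding opAadj_def by (rule trace_sum_left)
  also have "\<dots> = (\<Sum>i\<in>UNIV. y$i * trace (A i ** X))"
    by (simp add: scalar_matrix_assoc[symmetric] trace_scaleR)
  finally show ?thesis by (simp add: inner_vec_def opA_def)
qed

lemma opAadj_add: "opAadj A (y + z) = opAadj A y + opAadj A z"
  by (simp add: opAadj_def scaleR_add_left sum.distrib)
lemma opAadj_scale: "opAadj A (c *\<^sub>R y) = c *\<^sub>R opAadj A y"
  by (simp add: opAadj_def scaleR_sum_right)
lemma opAadj_axis: "opAadj A (axis i 1) = A i"
proof -
  have "opAadj A (axis i 1) = (\<Sum>j\<in>UNIV. if j = i then A j else 0)"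
    unfolding opAadj_def by (rule sum.cong) (auto simp: axis_def)
  thus ?thesis by simp
qed

lemma span_opAadj:
  fixes A :: "'m::finite \<Rightarrow> real^'n^'n"
  shows "W \<in> span (range A) \<Longrightarrow> \<exists>y. W = opAadj A y"
proof -
  have sub: "subspace (range (opAadj A))"
    unfolding subspace_def
  proof (intro conjI ballI allI)
    show "0 \<in> range (opAadj A)"
      by (rule range_eqI[of _ _ 0]) (simp add: opAadj_def)
    fix x y assume "x \<in> range (opAadj A)" "y \<in> range (opAadj A)"
    then obtain a b where "x = opAadj A a" "y = opAadj A b" by auto
    thus "x + y \<in> range (opAadj A)" by (metis opAadj_add rangeI)
  next
    fix c x assume "x \<in> range (opAadj A)"
    then obtain a where "x = opAadj A a" by auto
    thus "c *\<^sub>R x \<in> range (opAadj A)" by (metis opAadj_scale rangeI)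
  qed
  have "range A \<subseteq> range (opAadj A)" by (metis image_subsetI opAadj_axis rangeI)
  hence "span (range A) \<subseteq> range (opAadj A)" using sub by (metis span_minimal)
  thus "W \<in> span (range A) \<Longrightarrow> \<exists>y. W = opAadj A y" by auto
qed

lemma opAadj_span:
  fixes A :: "'m::finite \<Rightarrow> real^'n^'n"
  shows "opAadj A y \<in> span (range A)"
  unfolding opAadj_def by (intro span_sum span_scale span_base) auto

lemma span_symm:
  assumes "\<And>i. symm (A i)"
  shows "W \<in> span (range A) \<Longrightarrow> symm W"
proof -
  have "subspace {M::real^'n^'n. symm M}"
    by (simp add: subspace_def)
  moreover have "range A \<subseteq> {M. symm M}" using assms by auto
  ultimately have "span (range A) \<subseteq> {M. symm M}" by (metis span_minimal)
  thus "W \<in> span (range A) \<Longrightarrow> symm W" by auto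
qed

lemma span_lemma:
  fixes A :: "'m::finite \<Rightarrow> real^'n^'n"
  assumes symA: "\<And>i. symm (A i)" and sW: "symm W"
    and H: "\<And>D. symm D \<Longrightarrow> opA A D = 0 \<Longrightarrow> trace (W ** D) = 0"
  shows "W \<in> span (range A)"
proof -
  obtain y z where y: "y \<in> span (range A)" and z: "\<And>w. w \<in> span (range A) \<Longrightarrow> orthogonal z w"
    and W: "W = y + z"
    using orthogonal_subspace_decomp_exists[of "range A" W] by metis
  have sy: "symm y" using span_symm[OF symA y] .
  have sz: "symm z" using sW sy W by (metis add_diff_cancel_left' symm_diff)
  have "opA A z = 0"
  proof -
    have "trace (A i ** z) = 0" for i
    proof -
      have "orthogonal z (A i)" using z by (simp add: span_base)
      thus ?thesis by (simp add: trace_symm_inner[OF sz] orthogonal_def inner_commute)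
    qed
    thus ?thesis by (simp add: opA_def vec_eq_iff)
  qed
  hence "trace (W ** z) = 0" using H sz by blast
  hence "W \<bullet> z = 0" by (simp add: trace_symm_inner[OF sz])
  moreover have "y \<bullet> z = 0" using z[OF y] by (simp add: orthogonal_def inner_commute)
  ultimately have "z \<bullet> z = 0" by (simp add: W inner_add_left)
  hence "z = 0" by simp
  thus ?thesis using W y by simp
qed

lemma farkas1:
  fixes f g :: "'a::real_vector \<Rightarrow> real"
  assumes lf: "linear f" and lg: "linear g"
    and P: "\<And>D c. P D \<Longrightarrow> P (D + c *\<^sub>R Dz)" "\<And>D. P D \<Longrightarrow> P (- D)" "P Dz"
    and g0: "g Dz > 0"
    and H: "\<And>D. P D \<Longrightarrow> g D > 0 \<Longrightarrow> f D \<ge> 0"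
  shows "f Dz \<ge> 0" "\<And>D. P D \<Longrightarrow> f D = (f Dz / g Dz) * g D"
proof -
  show f0: "f Dz \<ge> 0" using H[OF P(3) g0] .
  fix D assume PD: "P D"
  define D1 where "D1 = D + (- (g D / g Dz)) *\<^sub>R Dz"
  have PD1: "P D1" unfolding D1_def by (rule P(1)[OF PD])
  have gD1: "g D1 = 0" using g0 unfolding D1_def by (simp only: linear_add[OF lg] linear_scale[OF lg]) simp
  have ge: "f D1 \<ge> 0"
  proof (rule ccontr)
    assume "\<not> f D1 \<ge> 0"
    hence neg: "f D1 < 0" by simp
    define e where "e = - f D1 / (f Dz + 1)"
    have e0: "e > 0" using neg f0 unfolding e_def by (intro divide_pos_pos) auto
    have "g (D1 + e *\<^sub>R Dz) > 0" using gD1 g0 e0 by (simp add: linear_add[OF lg] linear_scale[OF lg])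
    hence "f (D1 + e *\<^sub>R Dz) \<ge> 0" using H P(1)[OF PD1] by blast
    hence "f D1 + e * f Dz \<ge> 0" by (simp add: linear_add[OF lf] linear_scale[OF lf])
    moreover have "e * f Dz < - f D1"
    proof -
      have "e * (f Dz + 1) = - f D1" using f0 by (simp add: e_def)
      thus ?thesis using e0 by (simp add: algebra_simps)
    qed
    ultimately show False by linarith
  qed
  have le: "f D1 \<le> 0"
  proof (rule ccontr)
    assume "\<not> f D1 \<le> 0"
    hence pos: "f (- D1) < 0" by (simp add: linear_neg[OF lf])
    define e where "e = - f (- D1) / (f Dz + 1)"
    have e0: "e > 0" using pos f0 unfolding e_def by (intro divide_pos_pos) auto
    have "g (- D1 + e *\<^sub>R Dz) > 0" using gD1 g0 e0
      by (simp only: linear_add[OF lg] linear_scale[OF lg] linear_neg[OF lg]) simp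
    hence "f (- D1 + e *\<^sub>R Dz) \<ge> 0" using H P(1)[OF P(2)[OF PD1]] by blast
    hence "f (- D1) + e * f Dz \<ge> 0" by (simp only: linear_add[OF lf] linear_scale[OF lf]) simp
    moreover have "e * f Dz < - f (- D1)"
    proof -
      have "e * (f Dz + 1) = - f (- D1)" using f0 by (simp add: e_def)
      thus ?thesis using e0 by (simp add: algebra_simps)
    qed
    ultimately show False by linarith
  qed
  have "f D1 = 0" using ge le by simp
  thus "f D = (f Dz / g Dz) * g D"
    using g0 unfolding D1_def by (simp only: linear_add[OF lf] linear_scale[OF lf]) (simp add: field_simps)
qed

lemma linear_trace_mult: "linear (\<lambda>D. trace (M ** (D::real^'n^'n)))"
  by (rule linearI) (simp_all add: matrix_add_ldistrib matrix_scalar_ac scalar_matrix_assoc[symmetric] trace_add trace_scaleR)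


context hatc
begin

lemma KE_h: "Y \<in> KE E \<gamma> \<longleftrightarrow> symm Y \<and> trace (h Y) \<ge> \<gamma> * norm (h Y)"
  by (auto simp: KE_def tr_P normE_h)

lemma E_in_KE:
  assumes "0 \<le> \<gamma>" "\<gamma> \<le> 1"
  shows "E \<in> KE E \<gamma>"
proof -
  define n where "n = real CARD('n)"
  have n1: "n \<ge> 1" by (simp add: n_def)
  have nm: "norm (mat 1 :: real^'n^'n) = sqrt n" by (simp add: norm_eq_sqrt_inner inner_one_one n_def)
  have "sqrt n \<le> n"
  proof -
    have "sqrt n \<le> sqrt (n * n)" using n1 by (intro real_sqrt_le_mono) (simp add: mult_le_cancel_left1)
    thus ?thesis using n1 by simp
  qed
  moreover have "\<gamma> * sqrt n \<le> 1 * sqrt n" using assms n1 by (intro mult_right_mono) auto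
  ultimately have "\<gamma> * sqrt n \<le> n" by linarith
  hence "\<gamma> * norm (mat 1 :: real^'n^'n) \<le> trace (mat 1 :: real^'n^'n)"
    by (simp add: nm trace_I n_def)
  thus ?thesis using sE by (simp add: KE_h h_E)
qed

lemma trace_LML: "symm D \<Longrightarrow> trace ((L ** M ** transpose L) ** D) = M \<bullet> h D"
  by (subst tr_SY) (simp add: k_rec trace_symm_inner h_symm)

lemma kkt:
  fixes A :: "'m::finite \<Rightarrow> real^'n^'n" and b :: "real^'m" and y :: "real^'m"
  assumes symA: "\<And>i. symm (A i)" and symC: "symm C" and C_notin: "C \<notin> span (range A)"
    and alpha: "0 < \<alpha>" "\<alpha> < 1" and Ab: "opA A E = b" and b_nz: "b \<noteq> 0"
    and X_opt: "QP_opt A b C E \<alpha> X" and S_opt: "QPdual_opt A b C E \<alpha> y S"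
  shows "norm (h X) > 0 \<and> trace (h X) = \<alpha> * norm (h X)
     \<and> (\<exists>\<mu>>0. k S = \<mu> *\<^sub>R (mat 1 - (\<alpha> / norm (h X)) *\<^sub>R h X))"
proof -
  have AX: "opA A X = b" and XK: "X \<in> KE E \<alpha>"
    and opt: "\<And>X'. opA A X' = b \<Longrightarrow> X' \<in> KE E \<alpha> \<Longrightarrow> trace (C ** X) \<le> trace (C ** X')"
    using X_opt unfolding QP_opt_def by auto
  have dfeas: "opAadj A y + S = C" and SK: "S \<in> dual_cone (KE E \<alpha>)"
    and optd: "\<And>y' S'. opAadj A y' + S' = C \<Longrightarrow> S' \<in> dual_cone (KE E \<alpha>) \<Longrightarrow> b \<bullet> y' \<le> b \<bullet> y"
    using S_opt unfolding QPdual_opt_def by auto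
  have sX: "symm X" and tX0: "trace (h X) \<ge> \<alpha> * norm (h X)" using XK by (auto simp: KE_h)
  have sS: "symm S" and Sdual: "\<And>Y. Y \<in> KE E \<alpha> \<Longrightarrow> trace (S ** Y) \<ge> 0"
    using SK unfolding dual_cone_def by auto
  have "X \<noteq> 0" using AX b_nz opA_zero by metis
  hence "h X \<noteq> 0" using Y_rec[of X] by auto
  hence nu: "norm (h X) > 0" by simp
  define \<nu> where "\<nu> = norm (h X)"
  have nu0: "\<nu> > 0" using nu by (simp add: \<nu>_def)
  have feas: "X + \<epsilon> *\<^sub>R D \<in> KE E \<alpha>" if "symm D" "trace (h X + \<epsilon> *\<^sub>R h D) \<ge> \<alpha> * norm (h X + \<epsilon> *\<^sub>R h D)"
    for D \<epsilon> using that sX by (simp add: KE_h h_add h_scale)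
  have dirC: "trace (C ** X) \<le> trace (C ** X) + \<epsilon> * trace (C ** D)"
    if "opA A D = 0" "X + \<epsilon> *\<^sub>R D \<in> KE E \<alpha>" for D \<epsilon>
  proof -
    have "opA A (X + \<epsilon> *\<^sub>R D) = b" using that AX by (simp add: opA_add opA_scale)
    hence "trace (C ** X) \<le> trace (C ** (X + \<epsilon> *\<^sub>R D))" using opt that by blast
    thus ?thesis by (simp add: trace_lin)
  qed
  have n1: "real CARD('n) \<ge> 1" by simp
  have a2: "\<alpha>^2 < 1"
  proof -
    have "\<alpha>^2 < 1^2" using alpha by (intro power_strict_mono) auto
    thus ?thesis by simp
  qed
  have bd: "trace (h X) = \<alpha> * \<nu>"
  proof (rule ccontr)
    assume "trace (h X) \<noteq> \<alpha> * \<nu>"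
    hence gap: "trace (h X) > \<alpha> * norm (h X)" using tX0 by (simp add: \<nu>_def)
    have Cz: "trace (C ** D) = 0" if sD: "symm D" and AD: "opA A D = 0" for D
    proof -
      obtain \<epsilon> where e: "\<epsilon> > 0" and p: "trace (h X + \<epsilon> *\<^sub>R h D) \<ge> \<alpha> * norm (h X + \<epsilon> *\<^sub>R h D)"
        and m: "trace (h X + (-\<epsilon>) *\<^sub>R h D) \<ge> \<alpha> * norm (h X + (-\<epsilon>) *\<^sub>R h D)"
        using LF2[OF gap, of "h D"] alpha(1) by (meson less_imp_le)
      have "trace (C ** X) \<le> trace (C ** X) + \<epsilon> * trace (C ** D)"
        using dirC[OF AD feas[OF sD p]] .
      moreover have "trace (C ** X) \<le> trace (C ** X) + (-\<epsilon>) * trace (C ** D)"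
        using dirC[OF AD feas[OF sD m]] .
      ultimately have "\<epsilon> * trace (C ** D) = 0" by linarith
      thus ?thesis using e by simp
    qed
    have "C \<in> span (range A)" using span_lemma[OF symA symC Cz] .
    thus False using C_notin by simp
  qed
  define Gh where "Gh = mat 1 - (\<alpha> / \<nu>) *\<^sub>R h X"
  define G where "G = L ** Gh ** transpose L"
  have sGh: "symm Gh" using sX by (simp add: Gh_def h_symm)
  have sG: "symm G" using sGh by (simp add: G_def symm_congr2)
  have trG: "trace (G ** D) = trace (h D) - (\<alpha> / \<nu>) * (h X \<bullet> h D)" if "symm D" for D
  proof -
    have "trace (G ** D) = Gh \<bullet> h D" using trace_LML[OF that] by (simp add: G_def)
    also have "\<dots> = mat 1 \<bullet> h D - (\<alpha> / \<nu>) * (h X \<bullet> h D)" by (simp add: Gh_def inner_diff_left)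
    also have "mat 1 \<bullet> h D = trace (h D)" by (simp add: trace_inner_one inner_commute)
    finally show ?thesis .
  qed
  have dirG: "\<exists>\<epsilon>>0. X + \<epsilon> *\<^sub>R D \<in> KE E \<alpha>" if sD: "symm D" and g: "trace (G ** D) > 0" for D
  proof -
    have "trace (h D) - (\<alpha> / norm (h X)) * (h X \<bullet> h D) > 0" using g trG[OF sD] by (simp add: \<nu>_def)
    from LF1[OF nu _ alpha(1) this] bd
    obtain \<epsilon> where "\<epsilon> > 0" "trace (h X + \<epsilon> *\<^sub>R h D) \<ge> \<alpha> * norm (h X + \<epsilon> *\<^sub>R h D)"
      by (auto simp: \<nu>_def)
    thus ?thesis using feas[OF sD] by blast
  qed
  have hE: "h E = mat 1" by (rule h_E)
  have GE: "trace (G ** E) = real CARD('n) - \<alpha>^2"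
  proof -
    have "h X \<bullet> mat 1 = \<alpha> * \<nu>" using bd by (simp add: trace_inner_one)
    thus ?thesis using trG[OF sE] nu0 by (simp add: hE trace_I power2_eq_square)
  qed
  have GX: "trace (G ** X) = 0"
  proof -
    have "h X \<bullet> h X = \<nu>^2" by (simp add: \<nu>_def power2_norm_eq_inner)
    thus ?thesis using trG[OF sX] bd nu0 by (simp add: power2_eq_square)
  qed
  have Gdual: "trace (G ** Y) \<ge> 0" if "Y \<in> KE E \<alpha>" for Y
  proof -
    have sY: "symm Y" and tY: "trace (h Y) \<ge> \<alpha> * norm (h Y)" using that by (auto simp: KE_h)
    have "h X \<bullet> h Y \<le> \<nu> * norm (h Y)" using norm_cauchy_schwarz by (simp add: \<nu>_def)
    hence "(\<alpha> / \<nu>) * (h X \<bullet> h Y) \<le> (\<alpha> / \<nu>) * (\<nu> * norm (h Y))"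
      using alpha nu0 by (intro mult_left_mono) auto
    also have "\<dots> = \<alpha> * norm (h Y)" using nu0 by simp
    finally show ?thesis using trG[OF sY] tY by simp
  qed
  have gD0: "trace (G ** (E - X)) > 0"
  proof -
    have "trace (G ** (E - X)) = trace (G ** E) - trace (G ** X)"
      by (simp add: matrix_diff_ldistrib trace_sub)
    also have "\<dots> = real CARD('n) - \<alpha>^2" using GE GX by simp
    also have "\<dots> > 0" using a2 n1 by linarith
    finally show ?thesis .
  qed
  define \<mu>0 where "\<mu>0 = trace (C ** (E - X)) / trace (G ** (E - X))"
  have F1: "trace (C ** (E - X)) \<ge> 0 \<and> (\<forall>D. symm D \<and> opA A D = 0 \<longrightarrow> trace (C ** D) = \<mu>0 * trace (G ** D))"
  proof -
    have H: "trace (C ** D) \<ge> 0" if PD: "symm D \<and> opA A D = 0" and gp: "trace (G ** D) > 0" for D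
    proof -
      obtain \<epsilon> where e: "\<epsilon> > 0" and K: "X + \<epsilon> *\<^sub>R D \<in> KE E \<alpha>" using dirG[of D] PD gp by blast
      have "0 \<le> \<epsilon> * trace (C ** D)" using dirC[OF _ K] PD by simp
      thus ?thesis using e by (simp add: zero_le_mult_iff)
    qed
    have P1: "symm (D + c *\<^sub>R (E - X)) \<and> opA A (D + c *\<^sub>R (E - X)) = 0" if "symm D \<and> opA A D = 0" for D c
      using that sE sX AX Ab by (simp add: opA_add opA_scale opA_diff)
    have P2: "symm (- D) \<and> opA A (- D) = 0" if "symm D \<and> opA A D = 0" for D
      using that opA_scale[of A "-1" D] by simp
    have P3: "symm (E - X) \<and> opA A (E - X) = 0" using sE sX AX Ab by (simp add: opA_diff)
    note fk = farkas1[where f="\<lambda>D. trace (C ** D)" and g="\<lambda>D. trace (G ** D)"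
        and P="\<lambda>D. symm D \<and> opA A D = 0" and Dz="E - X",
        OF linear_trace_mult linear_trace_mult P1 P2 P3 gD0 H]
    show ?thesis
    proof (intro conjI allI impI)
      show "trace (C ** (E - X)) \<ge> 0" by (rule fk(1))
      fix D assume "symm D \<and> opA A D = 0"
      thus "trace (C ** D) = \<mu>0 * trace (G ** D)" unfolding \<mu>0_def using fk(2) by blast
    qed
  qed
  have mu0: "\<mu>0 \<ge> 0" using F1 gD0 by (simp add: \<mu>0_def)
  define W where "W = C - \<mu>0 *\<^sub>R G"
  have "W \<in> span (range A)"
  proof (rule span_lemma[OF symA])
    show "symm W" using symC sG by (simp add: W_def)
    fix D assume "symm D" "opA A D = 0"
    thus "trace (W ** D) = 0" using F1
      by (simp add: W_def matrix_diff_rdistrib trace_sub scalar_matrix_assoc[symmetric] trace_scaleR)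
  qed
  then obtain y' where y': "W = opAadj A y'" using span_opAadj by blast
  have S'dual: "\<mu>0 *\<^sub>R G \<in> dual_cone (KE E \<alpha>)"
    unfolding dual_cone_def using sG Gdual mu0
    by (auto simp: scalar_matrix_assoc[symmetric] trace_scaleR)
  have "opAadj A y' + \<mu>0 *\<^sub>R G = C" using y'[symmetric] by (simp add: W_def)
  hence "b \<bullet> y' \<le> b \<bullet> y" using optd S'dual by blast
  moreover have "b \<bullet> y' = trace (C ** X)"
  proof -
    have "b \<bullet> y' = trace (opAadj A y' ** X)" using opAadj_trace[of y' A X] AX by (simp add: inner_commute)
    also have "\<dots> = trace (C ** X) - \<mu>0 * trace (G ** X)"
      by (simp add: y'[symmetric] W_def matrix_diff_rdistrib trace_sub scalar_matrix_assoc[symmetric] trace_scaleR)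
    finally show ?thesis using GX by simp
  qed
  moreover have "b \<bullet> y = trace (C ** X) - trace (S ** X)"
  proof -
    have "b \<bullet> y = trace (opAadj A y ** X)" using opAadj_trace[of y A X] AX by (simp add: inner_commute)
    also have "opAadj A y = C - S" using dfeas by (simp add: algebra_simps)
    finally show ?thesis by (simp add: matrix_diff_rdistrib trace_sub)
  qed
  moreover have "trace (S ** X) \<ge> 0" using Sdual XK by blast
  ultimately have SX: "trace (S ** X) = 0" by linarith
  define \<mu>1 where "\<mu>1 = trace (S ** E) / trace (G ** E)"
  have gE: "trace (G ** E) > 0" using GE a2 n1 by linarith
  have F2: "\<forall>D. symm D \<longrightarrow> trace (S ** D) = \<mu>1 * trace (G ** D)"
  proof -
    have H: "trace (S ** D) \<ge> 0" if PD: "symm D" and gp: "trace (G ** D) > 0" for D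
    proof -
      obtain \<epsilon> where e: "\<epsilon> > 0" and K: "X + \<epsilon> *\<^sub>R D \<in> KE E \<alpha>" using dirG[of D] PD gp by blast
      have "0 \<le> trace (S ** (X + \<epsilon> *\<^sub>R D))" using Sdual K by blast
      hence "0 \<le> \<epsilon> * trace (S ** D)" using SX by (simp add: trace_lin)
      thus ?thesis using e by (simp add: zero_le_mult_iff)
    qed
    have P1: "symm (D + c *\<^sub>R E)" if "symm D" for D c using that sE by simp
    have P2: "symm (- D)" if "symm D" for D :: "real^'n^'n" using that by simp
    note fk = farkas1[where f="\<lambda>D. trace (S ** D)" and g="\<lambda>D. trace (G ** D)"
        and P="symm" and Dz="E", OF linear_trace_mult linear_trace_mult P1 P2 sE gE H]
    show ?thesis
    proof (intro allI impI)
      fix D :: "real^'n^'n" assume "symm D"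
      thus "trace (S ** D) = \<mu>1 * trace (G ** D)" unfolding \<mu>1_def using fk(2) by blast
    qed
  qed
  have mu1: "\<mu>1 \<ge> 0"
  proof -
    have "trace (S ** E) \<ge> 0" using Sdual[OF E_in_KE] alpha by simp
    thus ?thesis using gE by (simp add: \<mu>1_def)
  qed
  define M where "M = S - \<mu>1 *\<^sub>R G"
  have sM: "symm M" using sS sG by (simp add: M_def)
  have "trace (M ** M) = trace (S ** M) - \<mu>1 * trace (G ** M)"
    by (simp add: M_def matrix_diff_rdistrib trace_sub scalar_matrix_assoc[symmetric] trace_scaleR)
  also have "\<dots> = 0" using F2 sM by simp
  finally have "M \<bullet> M = 0" by (simp add: trace_symm_inner[OF sM])
  hence SG: "S = \<mu>1 *\<^sub>R G" by (simp add: M_def)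
  have "\<mu>1 \<noteq> 0"
  proof
    assume "\<mu>1 = 0"
    hence "C = opAadj A y" using SG dfeas by simp
    thus False using C_notin opAadj_span by metis
  qed
  hence "\<mu>1 > 0" using mu1 by simp
  moreover have "k S = \<mu>1 *\<^sub>R (mat 1 - (\<alpha> / norm (h X)) *\<^sub>R h X)"
    by (simp add: SG k_scale G_def k_rec Gh_def \<nu>_def)
  ultimately show ?thesis using nu bd by (auto simp: \<nu>_def)
qed

end


lemma abs_inner_le: "\<bar>x \<bullet> y\<bar> \<le> norm x * norm (y::'a::real_inner)"
  using norm_cauchy_schwarz[of x y] norm_cauchy_schwarz[of "-x" y] by (simp add: abs_le_iff)

lemma abs_trace_le: "\<bar>trace (M::real^'n^'n)\<bar> \<le> sqrt (real CARD('n)) * norm M"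
  using abs_inner_le[of M "mat 1"] by (simp add: trace_inner_one norm_eq_sqrt_inner[of "mat 1::real^'n^'n"] inner_one_one mult.commute)

context hatc
begin

lemma tr_E_S: "trace (E ** S) = trace (k S)"
  using tr_FS[of E S] by (simp add: h_E)

lemma tr_ESES: "trace ((E ** S) ** (E ** S)) = trace (k S ** k S)"
  using tr_FSFS[of E S] by (simp add: h_E)

lemma linear_h: "linear h"
  by (rule linearI) (simp_all add: h_add h_scale)

lemma k_bound: "norm (k T) \<le> norm (transpose L ** E) * norm (E ** L) * norm T"
proof -
  have "k T = (transpose L ** E) ** T ** (E ** L)" by (simp add: k_def matrix_mul_assoc)
  also have "norm \<dots> \<le> norm ((transpose L ** E) ** T) * norm (E ** L)" by (rule norm_mm)
  also have "\<dots> \<le> norm (transpose L ** E) * norm T * norm (E ** L)"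
    by (intro mult_right_mono norm_mm) simp
  finally show ?thesis by (simp add: mult_ac)
qed

end

lemma dual_closed:
  fixes E S :: "real^'n^'n"
  assumes pE: "posdef E" and sS: "symm S" and b0: "0 \<le> \<beta>" and bn: "\<beta>^2 \<le> real CARD('n)"
    and H: "trace (E ** S) \<ge> sqrt (real CARD('n) - \<beta>^2) * sqrt (trace ((E ** S) ** (E ** S)))"
  shows "S \<in> dual_cone (KE E \<beta>)"
proof -
  obtain L where hc: "hatc E L" using hatc_exists[OF pE] by blast
  interpret hatc E L by (rule hc)
  have sk: "symm (k S)" using k_symm[OF sS] .
  have nk: "sqrt (trace ((E ** S) ** (E ** S))) = norm (k S)"
    by (simp add: tr_ESES trace_symm_inner[OF sk] norm_eq_sqrt_inner)
  have "trace (k S) \<ge> sqrt (real CARD('n) - \<beta>^2) * norm (k S)"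
    using H by (simp only: nk tr_E_S)
  hence a: "k S \<bullet> mat 1 \<ge> sqrt (real CARD('n) - \<beta>^2) * norm (k S)"
    by (simp add: trace_inner_one)
  show ?thesis unfolding dual_cone_def
  proof (intro CollectI conjI ballI)
    show "symm S" by fact
    fix Y assume "Y \<in> KE E \<beta>"
    hence sY: "symm Y" and tY: "trace (h Y) \<ge> \<beta> * norm (h Y)" by (auto simp: KE_h)
    have "h Y \<bullet> mat 1 \<ge> \<beta> * norm (h Y)" using tY by (simp add: trace_inner_one)
    hence "k S \<bullet> h Y \<ge> 0"
      using circ_dual[OF inner_one_one _ b0 bn a] by simp
    thus "trace (S ** Y) \<ge> 0" by (subst tr_SY) (simp add: trace_symm_inner h_symm[OF sY])
  qed
qed

lemma dual_int:
  fixes E S :: "real^'n^'n"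
  assumes pE: "posdef E" and sS: "symm S" and b0: "0 \<le> \<beta>" and bn: "\<beta>^2 \<le> real CARD('n)"
    and H: "trace (E ** S) > sqrt (real CARD('n) - \<beta>^2) * sqrt (trace ((E ** S) ** (E ** S)))"
  shows "S \<in> int_sym (dual_cone (KE E \<beta>))"
proof -
  obtain L where hc: "hatc E L" using hatc_exists[OF pE] by blast
  interpret hatc E L by (rule hc)
  define c where "c = sqrt (real CARD('n) - \<beta>^2)"
  define K0 where "K0 = norm (transpose L ** E) * norm (E ** L)"
  define rn where "rn = sqrt (real CARD('n))"
  have c0: "c \<ge> 0" using bn by (simp add: c_def)
  have K0: "K0 \<ge> 0" by (simp add: K0_def)
  have rn0: "rn \<ge> 0" by (simp add: rn_def)
  have crit: "(trace (k T) \<ge> c * norm (k T)) \<longleftrightarrow>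
      trace (E ** T) \<ge> sqrt (real CARD('n) - \<beta>^2) * sqrt (trace ((E ** T) ** (E ** T)))" if "symm T" for T
    using k_symm[OF that] by (simp add: tr_ESES tr_E_S trace_symm_inner norm_eq_sqrt_inner c_def)
  define a0 where "a0 = trace (k S) - c * norm (k S)"
  have a0: "a0 > 0"
    using H k_symm[OF sS] by (simp add: a0_def tr_ESES tr_E_S trace_symm_inner norm_eq_sqrt_inner c_def)
  define e where "e = a0 / ((rn + c) * K0 + 1)"
  have den: "(rn + c) * K0 + 1 > 0" using rn0 c0 K0 by (simp add: add_nonneg_pos)
  have e0: "e > 0" using a0 den by (simp add: e_def)
  have eb: "(rn + c) * K0 * e < a0"
  proof -
    have "e * ((rn + c) * K0 + 1) = a0" using den by (simp add: e_def)
    thus ?thesis using e0 by (simp add: algebra_simps)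
  qed
  show ?thesis unfolding int_sym_def
  proof (intro CollectI conjI exI[of _ e] allI impI)
    show "S \<in> dual_cone (KE E \<beta>)"
      by (rule dual_closed[OF pE sS b0 bn]) (use H in simp)
    show "e > 0" by fact
    fix T assume T: "symm T \<and> norm (T - S) < e"
    have sT: "symm T" using T by simp
    define D where "D = k T - k S"
    have D: "D = k (T - S)" by (simp add: D_def k_diff)
    have nD: "norm D \<le> K0 * norm (T - S)" unfolding D K0_def by (rule k_bound)
    have nD2: "norm D \<le> K0 * e" using nD T K0 by (meson less_imp_le mult_left_mono order_trans)
    have tD: "\<bar>trace D\<bar> \<le> rn * norm D" unfolding rn_def by (rule abs_trace_le)
    have "trace (k T) = trace (k S) + trace D" by (simp add: D_def trace_sub)
    moreover have "norm (k T) \<le> norm (k S) + norm D"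
      using norm_triangle_ineq[of "k S" D] by (simp add: D_def)
    ultimately have "trace (k T) - c * norm (k T) \<ge> a0 - rn * norm D - c * norm D"
    proof -
      assume t1: "trace (k T) = trace (k S) + trace D" and t2: "norm (k T) \<le> norm (k S) + norm D"
      have "c * norm (k T) \<le> c * (norm (k S) + norm D)" using t2 c0 by (rule mult_left_mono)
      moreover have "trace D \<ge> - (rn * norm D)" using tD by linarith
      ultimately show ?thesis using t1 unfolding a0_def by (simp add: algebra_simps)
    qed
    also have "a0 - rn * norm D - c * norm D \<ge> a0 - (rn + c) * K0 * e"
    proof -
      have "(rn + c) * norm D \<le> (rn + c) * (K0 * e)" using nD2 rn0 c0 by (intro mult_left_mono) auto
      thus ?thesis by (simp add: algebra_simps)
    qed
    finally have "trace (k T) \<ge> c * norm (k T)" using eb by linarith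
    hence "trace (E ** T) \<ge> sqrt (real CARD('n) - \<beta>^2) * sqrt (trace ((E ** T) ** (E ** T)))"
      using crit[OF sT] by simp
    thus "T \<in> dual_cone (KE E \<beta>)" by (rule dual_closed[OF pE sT b0 bn])
  qed
qed

lemma cont_lin: "linear f \<Longrightarrow> continuous_on UNIV (f :: 'a::euclidean_space \<Rightarrow> 'b::real_normed_vector)"
  by (simp add: linear_conv_bounded_linear linear_continuous_on)

lemma linear_transpose: "linear (transpose :: real^'n^'m \<Rightarrow> real^'m^'n)"
  by (rule linearI) (simp_all add: transpose_def vec_eq_iff)

lemma linear_opA: "linear (opA A)"
  by (rule linearI) (simp_all add: opA_add opA_scale)

lemma linear_trace: "linear (trace :: real^'n^'n \<Rightarrow> real)"
  by (rule linearI) (simp_all add: trace_add trace_scaleR)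

lemma exist_opt:
  fixes A :: "'m::finite \<Rightarrow> real^'n^'n" and b :: "real^'m" and y :: "real^'m"
  assumes pE: "posdef E" and AE: "opA A E = b" and b0: "0 \<le> \<beta>" and b1: "\<beta> \<le> 1"
    and dfe: "opAadj A y + S = C" and Sint: "S \<in> int_sym (dual_cone (KE E \<beta>))"
  shows "\<exists>X. QP_opt A b C E \<beta> X"
proof -
  obtain L where hc: "hatc E L" using hatc_exists[OF pE] by blast
  interpret hatc E L by (rule hc)
  obtain e where e0: "e > 0" and eT: "\<And>T. symm T \<Longrightarrow> norm (T - S) < e \<Longrightarrow> T \<in> dual_cone (KE E \<beta>)"
    using Sint unfolding int_sym_def by blast
  have sS: "symm S" using Sint unfolding int_sym_def dual_cone_def by auto
  have bound: "trace (S ** Y) \<ge> (e/2) * norm Y" if Y: "Y \<in> KE E \<beta>" for Y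
  proof (cases "Y = 0")
    case True thus ?thesis by simp
  next
    case False
    hence nY: "norm Y > 0" by simp
    have sY: "symm Y" using Y by (simp add: KE_def)
    define T where "T = S - (e / (2 * norm Y)) *\<^sub>R Y"
    have "norm (T - S) = e / 2" using nY e0 by (simp add: T_def)
    hence "T \<in> dual_cone (KE E \<beta>)" using eT[of T] sS sY e0 by (simp add: T_def)
    hence "trace (T ** Y) \<ge> 0" using Y by (simp add: dual_cone_def)
    hence "trace (S ** Y) - (e / (2 * norm Y)) * trace (Y ** Y) \<ge> 0"
      by (simp add: T_def matrix_diff_rdistrib trace_sub scalar_matrix_assoc[symmetric] trace_scaleR)
    moreover have "trace (Y ** Y) = norm Y * norm Y"
      by (simp add: trace_symm_inner[OF sY] norm_eq_sqrt_inner)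
    ultimately show ?thesis using nY by (simp add: field_simps)
  qed
  define F where "F = {Y. opA A Y = b \<and> Y \<in> KE E \<beta> \<and> trace (C ** Y) \<le> trace (C ** E)}"
  have EF: "E \<in> F" using AE E_in_KE[OF b0 b1] by (simp add: F_def)
  have Fb: "norm Y \<le> (trace (C ** E) - b \<bullet> y) / (e/2)" if "Y \<in> F" for Y
  proof -
    have AY: "opA A Y = b" and KY: "Y \<in> KE E \<beta>" and cY: "trace (C ** Y) \<le> trace (C ** E)"
      using that by (auto simp: F_def)
    have "trace (C ** Y) = trace (opAadj A y ** Y) + trace (S ** Y)"
      by (simp add: dfe[symmetric] matrix_add_rdistrib trace_add)
    also have "trace (opAadj A y ** Y) = b \<bullet> y" using opAadj_trace[of y A Y] AY by (simp add: inner_commute)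
    finally have "(e/2) * norm Y \<le> trace (C ** E) - b \<bullet> y" using bound[OF KY] cY by linarith
    thus ?thesis using e0 by (simp add: field_simps)
  qed
  have bdd: "bounded F" unfolding bounded_iff using Fb by blast
  have KEeq: "KE E \<beta> = {Y. transpose Y = Y} \<inter> {Y. \<beta> * norm (h Y) \<le> trace (h Y)}"
    by (auto simp: KE_h symm_def)
  have cl: "closed F"
  proof -
    have Feq: "F = {Y. opA A Y = b} \<inter> ({Y. transpose Y = Y} \<inter> {Y. \<beta> * norm (h Y) \<le> trace (h Y)})
              \<inter> {Y. trace (C ** Y) \<le> trace (C ** E)}"
      by (auto simp: F_def KEeq)
    have c1: "closed {Y. opA A Y = b}"
      by (rule closed_Collect_eq) (simp_all add: cont_lin linear_opA)
    have c2: "closed {Y::real^'n^'n. transpose Y = Y}"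
      by (rule closed_Collect_eq) (simp_all add: cont_lin linear_transpose)
    have c3: "closed {Y. \<beta> * norm (h Y) \<le> trace (h Y)}"
    proof (rule closed_Collect_le)
      have ch: "continuous_on UNIV h" by (simp add: cont_lin linear_h)
      show "continuous_on UNIV (\<lambda>Y. \<beta> * norm (h Y))"
        by (intro continuous_intros continuous_on_compose2[OF _ ch]) auto
      show "continuous_on UNIV (\<lambda>Y. trace (h Y))"
        using cont_lin[OF linear_compose[OF linear_h linear_trace]] by (simp add: o_def)
    qed
    have c4: "closed {Y. trace (C ** Y) \<le> trace (C ** E)}"
      by (rule closed_Collect_le) (simp_all add: cont_lin linear_trace_mult)
    show ?thesis unfolding Feq by (intro closed_Int c1 c2 c3 c4)
  qed
  have cpt: "compact F" using bdd cl by (simp add: compact_eq_bounded_closed)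
  have ne: "F \<noteq> {}" using EF by auto
  have cont: "continuous_on F (\<lambda>Y. trace (C ** Y))"
    by (rule continuous_on_subset[OF cont_lin[OF linear_trace_mult]]) simp
  obtain X where XF: "X \<in> F" and Xm0: "\<forall>Y\<in>F. trace (C ** X) \<le> trace (C ** Y)"
    using continuous_attains_inf[OF cpt ne cont] by (elim bexE)
  have Xm: "\<And>Y. Y \<in> F \<Longrightarrow> trace (C ** X) \<le> trace (C ** Y)" using Xm0 by blast
  have "QP_opt A b C E \<beta> X"
    unfolding QP_opt_def
  proof (intro conjI allI impI)
    show "opA A X = b" "X \<in> KE E \<beta>" using XF by (auto simp: F_def)
    fix X' assume H: "opA A X' = b \<and> X' \<in> KE E \<beta>"
    show "trace (C ** X) \<le> trace (C ** X')"
    proof (cases "trace (C ** X') \<le> trace (C ** E)")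
      case True thus ?thesis using H Xm by (simp add: F_def)
    next
      case False thus ?thesis using XF by (simp add: F_def)
    qed
  qed
  thus ?thesis by blast
qed



lemma Dq_pos:
  fixes \<alpha> p3 p4 :: real
  assumes a: "0 < \<alpha>" "\<alpha> < 1" and p3: "p3 \<le> 1" and p34: "p3^2 \<le> p4"
  shows "1 - 2*\<alpha>*p3 + \<alpha>^2*p4 > 0" "\<alpha> * (1 - \<alpha> * p3) > 0"
proof -
  have ap: "\<alpha> * p3 < 1"
  proof (cases "p3 \<le> 0")
    case True
    hence "\<alpha> * p3 \<le> 0" using a by (simp add: mult_nonneg_nonpos)
    thus ?thesis by simp
  next
    case False
    hence "\<alpha> * p3 \<le> \<alpha> * 1" using a p3 by (intro mult_left_mono) auto
    thus ?thesis using a by linarith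
  qed
  have "\<alpha>^2 * p3^2 \<le> \<alpha>^2 * p4" using p34 by (intro mult_left_mono) auto
  hence "1 - 2*\<alpha>*p3 + \<alpha>^2*p4 \<ge> (1 - \<alpha> * p3)^2" by (simp add: power2_eq_square algebra_simps)
  moreover have "(1 - \<alpha> * p3)^2 > 0" using ap by simp
  ultimately show "1 - 2*\<alpha>*p3 + \<alpha>^2*p4 > 0" by linarith
  show "\<alpha> * (1 - \<alpha> * p3) > 0" using a ap by simp
qed

lemma delta_pos:
  fixes \<alpha> p3 p4 Dq B :: real
  assumes a: "0 < \<alpha>" "\<alpha> < 1" and p4: "p4 \<le> 1" and Dq: "Dq = 1 - 2*\<alpha>*p3 + \<alpha>^2*p4" "Dq > 0"
    and B: "B = \<alpha> * (1 - \<alpha> * p3)"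
  shows "B / Dq > \<alpha> / 2"
proof -
  have "\<alpha>^2 * p4 < 1"
  proof -
    have "\<alpha>^2 < 1^2" using a by (intro power_strict_mono) auto
    hence "\<alpha>^2 < 1" by simp
    moreover have "\<alpha>^2 * p4 \<le> \<alpha>^2" using p4 by (simp add: mult_left_le)
    ultimately show ?thesis by linarith
  qed
  hence "\<alpha> * (\<alpha>^2 * p4) < \<alpha> * 1" using a by (intro mult_strict_left_mono) auto
  hence "\<alpha> * Dq < 2 * B" by (simp add: Dq B algebra_simps power2_eq_square)
  thus ?thesis using Dq(2) by (simp add: field_simps)
qed

lemma main_ineq:
  fixes \<alpha> p3 p4 Dq B n s \<beta> :: real
  assumes a: "0 < \<alpha>" "\<alpha> < 1" and p3: "p3 \<le> 1" and p4: "p4 \<le> 1" and n: "n \<ge> 1"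
    and Dq: "Dq = 1 - 2*\<alpha>*p3 + \<alpha>^2*p4" "Dq > 0" and B: "B = \<alpha> * (1 - \<alpha> * p3)"
    and s: "\<bar>s - B/Dq\<bar> \<le> B/Dq - \<alpha>/2"
    and be: "\<beta>^2 = \<alpha>^2 * ((1 + \<alpha>) / 2)"
  shows "(n - \<alpha>^2)^2 > (n - \<beta>^2) * (n - \<alpha>^2 + (Dq * s^2 - 2 * B * s))"
proof -
  define st where "st = B / Dq"
  define Q where "Q = Dq * s^2 - 2 * B * s"
  have Bst: "B = Dq * st" using Dq(2) by (simp add: st_def)
  have Qeq: "Q = Dq * (s - st)^2 - Dq * st^2" by (simp add: Q_def Bst algebra_simps power2_eq_square)
  have "(s - st)^2 \<le> (st - \<alpha>/2)^2"
  proof -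
    have "\<bar>s - st\<bar>^2 \<le> (st - \<alpha>/2)^2" using s unfolding st_def by (intro power_mono) auto
    thus ?thesis by simp
  qed
  hence "Q \<le> Dq * (st - \<alpha>/2)^2 - Dq * st^2" using Qeq Dq(2) by (simp add: mult_left_mono)
  also have "\<dots> = - \<alpha> * B + Dq * \<alpha>^2 / 4" by (simp add: Bst algebra_simps power2_eq_square)
  finally have Qle: "Q \<le> - \<alpha> * B + Dq * \<alpha>^2 / 4" .
  have mQ: "- \<alpha> * B + Dq * \<alpha>^2 / 4 = - (\<alpha>^2 * (1-\<alpha>) / 2) - (\<alpha>^2/4) * (1 + 2*\<alpha>*(1 - p3) - \<alpha>^2*p4)"
    by (simp add: Dq(1) B field_simps power2_eq_square)
  have "\<alpha>^2 < 1^2" using a by (intro power_strict_mono) auto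
  hence a2: "\<alpha>^2 < 1" by simp
  have pos: "1 + 2*\<alpha>*(1 - p3) - \<alpha>^2*p4 > 0"
  proof -
    have "2*\<alpha>*(1 - p3) \<ge> 0" using a p3 by simp
    moreover have "\<alpha>^2*p4 \<le> \<alpha>^2" using p4 by (simp add: mult_left_le)
    ultimately show ?thesis using a2 by linarith
  qed
  have a2p: "\<alpha>^2 > 0" using a by simp
  have Qlt: "Q < - (\<alpha>^2 * (1-\<alpha>) / 2)"
  proof -
    have "(\<alpha>^2/4) * (1 + 2*\<alpha>*(1 - p3) - \<alpha>^2*p4) > 0" using pos a2p by simp
    thus ?thesis using Qle mQ by linarith
  qed
  have ab: "\<alpha>^2 - \<beta>^2 = \<alpha>^2 * (1-\<alpha>) / 2" using be by (simp add: algebra_simps)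
  have ab0: "\<alpha>^2 - \<beta>^2 \<ge> 0"
  proof -
    have "\<alpha>^2 * (1-\<alpha>) / 2 \<ge> 0" using a by simp
    thus ?thesis using ab by linarith
  qed
  have nb: "n - \<beta>^2 > 0" using n a2 ab0 by linarith
  have "(n - \<beta>^2) * Q < (n - \<beta>^2) * (- (\<alpha>^2 - \<beta>^2))" using Qlt nb ab by (intro mult_strict_left_mono) auto
  moreover have "(n - \<beta>^2) * (\<alpha>^2 - \<beta>^2) \<ge> (n - \<alpha>^2) * (\<alpha>^2 - \<beta>^2)"
    using ab0 by (intro mult_right_mono) auto
  ultimately have "(n - \<beta>^2) * Q < - ((n - \<alpha>^2) * (\<alpha>^2 - \<beta>^2))" by linarith
  moreover have "(n - \<beta>^2) * (n - \<alpha>^2 + Q) = (n - \<alpha>^2)^2 + (n - \<beta>^2) * Q + (n - \<alpha>^2) * (\<alpha>^2 - \<beta>^2)"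
    by (simp add: algebra_simps power2_eq_square)
  ultimately show ?thesis unfolding Q_def[symmetric] by linarith
qed


lemma posdef_scale: "c > 0 \<Longrightarrow> posdef F \<Longrightarrow> posdef (c *\<^sub>R F)"
  unfolding posdef_def by (simp add: mv_scale)

lemma trace_scale_mult: "trace ((c *\<^sub>R F) ** S) = c * trace (F ** (S::real^'n^'n))"
  by (simp add: scalar_matrix_assoc[symmetric] trace_scaleR)

lemma trace_scale_mult2: "trace (((c *\<^sub>R F) ** S) ** ((c *\<^sub>R F) ** S)) = c^2 * trace ((F ** S) ** (F ** (S::real^'n^'n)))"
  by (simp add: scalar_matrix_assoc[symmetric] matrix_scalar_ac trace_scaleR power2_eq_square)

theorem corollary4p2:
  fixes A :: "'m::finite \<Rightarrow> real^'n^'n" and b :: "real^'m" and C :: "real^'n^'n"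
    and \<alpha> :: real and E X\<^sub>E S\<^sub>E :: "real^'n^'n" and y\<^sub>E :: "real^'m"
  assumes symA: "\<And>i. symm (A i)" and symC: "symm C"
    and primal_strict: "\<exists>X. posdef X \<and> opA A X = b"
    and dual_strict: "\<exists>y S. posdef S \<and> opAadj A y + S = C"
    and b_nz: "b \<noteq> 0"
    and C_notin: "C \<notin> span (range A)"
    and A_indep: "\<And>c :: 'm \<Rightarrow> real. (\<Sum>i\<in>UNIV. c i *\<^sub>R A i) = 0 \<Longrightarrow> (\<forall>i. c i = 0)"
    and alpha: "0 < \<alpha>" "\<alpha> < 1"
    and E_swath: "E \<in> Swath A b C \<alpha>"
    and X_opt: "QP_opt A b C E \<alpha> X\<^sub>E"
    and S_opt: "QPdual_opt A b C E \<alpha> y\<^sub>E S\<^sub>E"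
  shows "strict_convex_on UNIV (\<lambda>t. trace (((E + t *\<^sub>R X\<^sub>E) ** S\<^sub>E) ** ((E + t *\<^sub>R X\<^sub>E) ** S\<^sub>E)))
    \<and> (\<exists>t\<^sub>E. \<forall>t. trace (((E + t\<^sub>E *\<^sub>R X\<^sub>E) ** S\<^sub>E) ** ((E + t\<^sub>E *\<^sub>R X\<^sub>E) ** S\<^sub>E))
                 \<le> trace (((E + t *\<^sub>R X\<^sub>E) ** S\<^sub>E) ** ((E + t *\<^sub>R X\<^sub>E) ** S\<^sub>E)))
    \<and> (\<forall>t\<^sub>E. (\<forall>t. trace (((E + t\<^sub>E *\<^sub>R X\<^sub>E) ** S\<^sub>E) ** ((E + t\<^sub>E *\<^sub>R X\<^sub>E) ** S\<^sub>E))
                 \<le> trace (((E + t *\<^sub>R X\<^sub>E) ** S\<^sub>E) ** ((E + t *\<^sub>R X\<^sub>E) ** S\<^sub>E))) \<longrightarrow>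
        (let \<delta> = t\<^sub>E - (1/2) * \<alpha> / normE E X\<^sub>E;
             \<beta> = \<alpha> * sqrt ((1 + \<alpha>) / 2)
         in \<delta> > 0 \<and>
            (\<forall>t. t\<^sub>E - \<delta> \<le> t \<and> t \<le> t\<^sub>E + \<delta> \<longrightarrow>
               (let Et = (1 / (1 + t)) *\<^sub>R (E + t *\<^sub>R X\<^sub>E)
                in Et \<in> Swath A b C \<beta> \<and> S\<^sub>E \<in> int_sym (dual_cone (KE Et \<beta>))))))"

proof -
  have pE: "posdef E" and AE: "opA A E = b" using E_swath by (auto simp: Swath_def)
  obtain L where hc: "hatc E L" using hatc_exists[OF pE] by blast
  interpret hatc E L by (rule hc)
  have KK: "norm (h X\<^sub>E) > 0 \<and> trace (h X\<^sub>E) = \<alpha> * norm (h X\<^sub>E)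
     \<and> (\<exists>\<mu>>0. k S\<^sub>E = \<mu> *\<^sub>R (mat 1 - (\<alpha> / norm (h X\<^sub>E)) *\<^sub>R h X\<^sub>E))"
    by (rule kkt[OF symA symC C_notin alpha AE b_nz X_opt S_opt])
  define \<nu> where "\<nu> = norm (h X\<^sub>E)"
  have nu: "\<nu> > 0" and bd: "trace (h X\<^sub>E) = \<alpha> * \<nu>" using KK by (auto simp: \<nu>_def)
  obtain \<mu> where mu: "\<mu> > 0" and kS0: "k S\<^sub>E = \<mu> *\<^sub>R (mat 1 - (\<alpha> / \<nu>) *\<^sub>R h X\<^sub>E)"
    using KK by (auto simp: \<nu>_def)
  have sX: "symm X\<^sub>E" using X_opt by (simp add: QP_opt_def KE_def)
  have sS: "symm S\<^sub>E" using S_opt by (simp add: QPdual_opt_def dual_cone_def)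
  have dfe: "opAadj A y\<^sub>E + S\<^sub>E = C" using S_opt by (simp add: QPdual_opt_def)
  define X' where "X' = (1/\<nu>) *\<^sub>R h X\<^sub>E"
  have hX: "h X\<^sub>E = \<nu> *\<^sub>R X'" using nu by (simp add: X'_def)
  have sX': "symm X'" using h_symm[OF sX] by (simp add: X'_def)
  have XX: "X' \<bullet> X' = 1"
  proof -
    have "h X\<^sub>E \<bullet> h X\<^sub>E = \<nu>^2" by (simp add: \<nu>_def power2_norm_eq_inner)
    thus ?thesis using nu by (simp add: X'_def power2_eq_square)
  qed
  have tX': "X' \<bullet> mat 1 = \<alpha>"
    using bd nu by (simp add: X'_def trace_inner_one[symmetric] trace_scaleR)
  have kS: "k S\<^sub>E = \<mu> *\<^sub>R (mat 1 + (- \<alpha>) *\<^sub>R X')"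
    using nu by (simp add: kS0 hX)
  define p3 where "p3 = X' \<bullet> (X' ** X')"
  define p4 where "p4 = (X' ** X') \<bullet> (X' ** X')"
  have p3: "p3 \<le> 1" and p4: "p4 \<le> 1" and p34: "p3^2 \<le> p4"
    using pfacts[OF sX' XX] by (auto simp: p3_def p4_def)
  define Dq where "Dq = 1 - 2*\<alpha>*p3 + \<alpha>^2*p4"
  define B where "B = \<alpha> * (1 - \<alpha> * p3)"
  have Dq: "Dq > 0" and B0: "B > 0" using Dq_pos[OF alpha p3 p34] by (auto simp: Dq_def B_def)
  define n where "n = real CARD('n)"
  have n1: "n \<ge> 1" by (simp add: n_def)
  define N where "N = (\<lambda>s. mat 1 + (s - \<alpha>) *\<^sub>R X' + (- (s*\<alpha>)) *\<^sub>R (X' ** X'))"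
  have sN: "symm (N s)" for s using sX' by (simp add: N_def symm_sq)
  have Ni: "N s \<bullet> mat 1 = n - \<alpha>^2" "N s \<bullet> N s = n - \<alpha>^2 + Dq * s^2 - 2 * B * s" for s
    using N_inner[OF sX' XX tX', of "N s" s] by (simp_all add: N_def n_def Dq_def B_def p3_def p4_def)
  define F where "F = (\<lambda>t. E + t *\<^sub>R X\<^sub>E)"
  have sF: "symm (F t)" for t using sE sX by (simp add: F_def)
  have hF: "h (F t) = mat 1 + (t * \<nu>) *\<^sub>R X'" for t
    by (simp add: F_def h_add h_scale h_E hX)
  have hFk: "h (F t) ** k S\<^sub>E = \<mu> *\<^sub>R N (t * \<nu>)" for t
  proof -
    have "h (F t) ** k S\<^sub>E = (mat 1 + (t * \<nu>) *\<^sub>R X') ** (\<mu> *\<^sub>R (mat 1 + (- \<alpha>) *\<^sub>R X'))"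
      by (simp only: hF kS)
    also have "\<dots> = \<mu> *\<^sub>R ((mat 1 + (t * \<nu>) *\<^sub>R X') ** (mat 1 + (- \<alpha>) *\<^sub>R X'))"
      by (simp only: matrix_scalar_ac scalar_matrix_assoc[symmetric])
    also have "\<dots> = \<mu> *\<^sub>R N (t * \<nu>)" by (simp only: N_prod N_def)
    finally show ?thesis .
  qed
  have qf: "trace ((F t ** S\<^sub>E) ** (F t ** S\<^sub>E)) = \<mu>^2 * (n - \<alpha>^2 + Dq * (t*\<nu>)^2 - 2 * B * (t*\<nu>))" for t
  proof -
    have "trace ((F t ** S\<^sub>E) ** (F t ** S\<^sub>E)) = trace ((\<mu> *\<^sub>R N (t*\<nu>)) ** (\<mu> *\<^sub>R N (t*\<nu>)))"
      by (simp add: tr_FSFS hFk)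
    also have "\<dots> = \<mu>^2 * (N (t*\<nu>) \<bullet> N (t*\<nu>))"
      by (simp add: trace_scale_mult2[of \<mu> "N (t*\<nu>)" "mat 1", simplified] trace_symm_inner[OF sN]
          scalar_matrix_assoc[symmetric] matrix_scalar_ac trace_scaleR power2_eq_square)
    finally show ?thesis by (simp add: Ni)
  qed
  have trf: "trace (F t ** S\<^sub>E) = \<mu> * (n - \<alpha>^2)" for t
  proof -
    have "trace (F t ** S\<^sub>E) = trace (\<mu> *\<^sub>R N (t*\<nu>))" by (simp add: tr_FS hFk)
    also have "\<dots> = \<mu> * (N (t*\<nu>) \<bullet> mat 1)" by (simp add: trace_scaleR trace_inner_one)
    finally show ?thesis by (simp add: Ni)
  qed
  define a2 where "a2 = \<mu>^2 * Dq * \<nu>^2"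
  define a1 where "a1 = - 2 * \<mu>^2 * B * \<nu>"
  define a0 where "a0 = \<mu>^2 * (n - \<alpha>^2)"
  have a2: "a2 > 0" using mu Dq nu by (simp add: a2_def)
  have qeq: "(\<lambda>t. trace (((E + t *\<^sub>R X\<^sub>E) ** S\<^sub>E) ** ((E + t *\<^sub>R X\<^sub>E) ** S\<^sub>E))) = (\<lambda>t. a2 * t^2 + a1 * t + a0)"
  proof
    fix t
    show "trace (((E + t *\<^sub>R X\<^sub>E) ** S\<^sub>E) ** ((E + t *\<^sub>R X\<^sub>E) ** S\<^sub>E)) = a2 * t^2 + a1 * t + a0"
      using qf[of t] by (simp add: F_def a2_def a1_def a0_def algebra_simps power2_eq_square)
  qed
  have qe: "trace (((E + t *\<^sub>R X\<^sub>E) ** S\<^sub>E) ** ((E + t *\<^sub>R X\<^sub>E) ** S\<^sub>E)) = a2 * t^2 + a1 * t + a0" for t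
    using fun_cong[OF qeq] by simp
  define t0 where "t0 = - a1 / (2 * a2)"
  have t0: "t0 = B / (Dq * \<nu>)" using mu nu Dq by (simp add: t0_def a1_def a2_def field_simps power2_eq_square)
  have conj1: "strict_convex_on UNIV (\<lambda>t. trace (((E + t *\<^sub>R X\<^sub>E) ** S\<^sub>E) ** ((E + t *\<^sub>R X\<^sub>E) ** S\<^sub>E)))"
    unfolding qeq by (rule quad_strict[OF a2])
  have conj2: "\<exists>t\<^sub>E. \<forall>t. trace (((E + t\<^sub>E *\<^sub>R X\<^sub>E) ** S\<^sub>E) ** ((E + t\<^sub>E *\<^sub>R X\<^sub>E) ** S\<^sub>E))
                 \<le> trace (((E + t *\<^sub>R X\<^sub>E) ** S\<^sub>E) ** ((E + t *\<^sub>R X\<^sub>E) ** S\<^sub>E))"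
  proof -
    have m0: "\<forall>t. a2 * t0^2 + a1 * t0 + a0 \<le> a2 * t^2 + a1 * t + a0"
      using quad_min[OF a2, of t0 a1 a0] t0_def by blast
    show ?thesis unfolding qe using m0 by blast
  qed
  have nE: "normE E X\<^sub>E = \<nu>" by (simp add: normE_h[OF sX] \<nu>_def)
  have b0: "\<alpha> * sqrt ((1 + \<alpha>) / 2) \<ge> 0" using alpha by simp
  have bsq: "(\<alpha> * sqrt ((1 + \<alpha>) / 2))^2 = \<alpha>^2 * ((1 + \<alpha>) / 2)"
    using alpha by (simp add: power_mult_distrib)
  have a2lt: "\<alpha>^2 < 1"
  proof -
    have "\<alpha>^2 < 1^2" using alpha by (intro power_strict_mono) auto
    thus ?thesis by simp
  qed
  have bsq_le: "\<alpha>^2 * ((1 + \<alpha>) / 2) \<le> \<alpha>^2" using alpha by (simp add: mult_left_le)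
  have b1: "\<alpha> * sqrt ((1 + \<alpha>) / 2) \<le> 1"
  proof -
    have "sqrt ((1 + \<alpha>) / 2) \<le> 1" using alpha by simp
    hence "\<alpha> * sqrt ((1 + \<alpha>) / 2) \<le> \<alpha> * 1" using alpha by (intro mult_left_mono) auto
    thus ?thesis using alpha by linarith
  qed
  have conj3: "\<forall>t\<^sub>E. (\<forall>t. trace (((E + t\<^sub>E *\<^sub>R X\<^sub>E) ** S\<^sub>E) ** ((E + t\<^sub>E *\<^sub>R X\<^sub>E) ** S\<^sub>E))
                 \<le> trace (((E + t *\<^sub>R X\<^sub>E) ** S\<^sub>E) ** ((E + t *\<^sub>R X\<^sub>E) ** S\<^sub>E))) \<longrightarrow>
        (let \<delta> = t\<^sub>E - (1/2) * \<alpha> / normE E X\<^sub>E;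
             \<beta> = \<alpha> * sqrt ((1 + \<alpha>) / 2)
         in \<delta> > 0 \<and>
            (\<forall>t. t\<^sub>E - \<delta> \<le> t \<and> t \<le> t\<^sub>E + \<delta> \<longrightarrow>
               (let Et = (1 / (1 + t)) *\<^sub>R (E + t *\<^sub>R X\<^sub>E)
                in Et \<in> Swath A b C \<beta> \<and> S\<^sub>E \<in> int_sym (dual_cone (KE Et \<beta>)))))"
  proof (intro allI impI)
    fix tE assume H: "\<forall>t. trace (((E + tE *\<^sub>R X\<^sub>E) ** S\<^sub>E) ** ((E + tE *\<^sub>R X\<^sub>E) ** S\<^sub>E))
                 \<le> trace (((E + t *\<^sub>R X\<^sub>E) ** S\<^sub>E) ** ((E + t *\<^sub>R X\<^sub>E) ** S\<^sub>E))"
    have "tE = t0" using H quad_min[OF a2, of tE a1 a0] by (simp add: qe t0_def)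
    hence tE: "tE = B / (Dq * \<nu>)" using t0 by simp
    define \<beta> where "\<beta> = \<alpha> * sqrt ((1 + \<alpha>) / 2)"
    define \<delta> where "\<delta> = tE - (1/2) * \<alpha> / \<nu>"
    have sst: "B / Dq > \<alpha> / 2" by (rule delta_pos[OF alpha p4 Dq_def Dq B_def])
    have tEnu: "tE * \<nu> = B / Dq" using nu by (simp add: tE)
    have dnu: "\<delta> * \<nu> = B / Dq - \<alpha> / 2" using nu by (simp add: \<delta>_def tEnu[symmetric] algebra_simps)
    have d0: "\<delta> > 0"
    proof -
      have "\<delta> * \<nu> > 0" using dnu sst by simp
      thus ?thesis using nu by (simp add: zero_less_mult_iff)
    qed
    have main: "Et \<in> Swath A b C \<beta> \<and> S\<^sub>E \<in> int_sym (dual_cone (KE Et \<beta>))"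
      if t: "tE - \<delta> \<le> t" "t \<le> tE + \<delta>" and Et: "Et = (1 / (1 + t)) *\<^sub>R (E + t *\<^sub>R X\<^sub>E)" for t Et
    proof -
      define s where "s = t * \<nu>"
      have st: "\<bar>t - tE\<bar> \<le> \<delta>" using t by simp
      hence "\<bar>t - tE\<bar> * \<nu> \<le> \<delta> * \<nu>" using nu by (intro mult_right_mono) auto
      moreover have "\<bar>s - B / Dq\<bar> = \<bar>t - tE\<bar> * \<nu>"
      proof -
        have "s - B / Dq = (t - tE) * \<nu>" by (simp add: s_def tEnu[symmetric] left_diff_distrib)
        thus ?thesis using nu by (simp add: abs_mult)
      qed
      ultimately have sab: "\<bar>s - B / Dq\<bar> \<le> B / Dq - \<alpha> / 2" using dnu by simp
      have s0: "s \<ge> \<alpha> / 2" using sab unfolding abs_le_iff by linarith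
      have sle: "s \<le> 2 * (B / Dq)" using sab sst alpha unfolding abs_le_iff by linarith
      have spos: "s > 0" using s0 alpha by simp
      have tpos: "t > 0" using spos nu by (simp add: s_def zero_less_mult_iff)
      have Q0: "Dq * s^2 - 2 * B * s \<le> 0"
      proof -
        have "Dq * s \<le> 2 * B" using sle Dq by (simp add: field_simps)
        hence "s * (Dq * s) \<le> s * (2 * B)" using spos by (intro mult_left_mono) auto
        thus ?thesis by (simp add: power2_eq_square algebra_simps)
      qed
      have na: "n - \<alpha>^2 > 0" using n1 a2lt by linarith
      have NN: "N s \<bullet> N s \<le> n - \<alpha>^2" using Ni(2)[of s] Q0 by simp
      have NN0: "N s \<bullet> N s \<ge> 0" by simp
      have pdN: "u \<bullet> (N s *v u) > 0" if "u \<bullet> u = 1" for u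
      proof (rule pd_trace[OF sN])
        show "N s \<bullet> mat 1 > 0" using Ni(1) na by simp
        have "(real CARD('n) - 1) * (N s \<bullet> N s) \<le> (n - 1) * (n - \<alpha>^2)"
          using NN n1 by (simp add: n_def mult_left_mono)
        also have "\<dots> < (n - \<alpha>^2) * (n - \<alpha>^2)" using na a2lt by (intro mult_strict_right_mono) auto
        finally show "(real CARD('n) - 1) * (N s \<bullet> N s) < (N s \<bullet> mat 1)^2"
          by (simp add: Ni(1) power2_eq_square)
        show "u \<bullet> u = 1" by fact
      qed
      have pdh: "posdef (mat 1 + s *\<^sub>R X')"
        by (rule hat_pd[OF sX' XX alpha _ pdN]) (use spos in \<open>simp_all add: N_def\<close>)
      have pF: "posdef (F t)" by (rule posdef_h[OF sF]) (use pdh in \<open>simp add: hF s_def\<close>)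
      have c0: "1 / (1 + t) > 0" using tpos by simp
      have pEt: "posdef Et" using posdef_scale[OF c0 pF] by (simp add: Et F_def)
      have AEt: "opA A Et = b"
      proof -
        have "opA A (E + t *\<^sub>R X\<^sub>E) = (1 + t) *\<^sub>R b"
          using AE X_opt by (simp add: opA_add opA_scale QP_opt_def algebra_simps)
        thus ?thesis using tpos by (simp add: Et opA_scale)
      qed
      have bsqn: "\<beta>^2 \<le> real CARD('n)"
      proof -
        have "\<beta>^2 = \<alpha>^2 * ((1 + \<alpha>) / 2)" using bsq by (simp add: \<beta>_def)
        thus ?thesis using bsq_le a2lt n1 unfolding n_def by linarith
      qed
      have b0': "0 \<le> \<beta>" using b0 by (simp add: \<beta>_def)
      have crit: "trace (Et ** S\<^sub>E) > sqrt (real CARD('n) - \<beta>^2) * sqrt (trace ((Et ** S\<^sub>E) ** (Et ** S\<^sub>E)))"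
      proof -
        define c where "c = 1 / (1 + t)"
        have tr1: "trace (Et ** S\<^sub>E) = c * (\<mu> * (n - \<alpha>^2))"
        proof -
          have "trace (Et ** S\<^sub>E) = c * trace (F t ** S\<^sub>E)"
            unfolding Et F_def c_def by (rule trace_scale_mult)
          thus ?thesis using trf[of t] by simp
        qed
        have tr2: "trace ((Et ** S\<^sub>E) ** (Et ** S\<^sub>E)) = (c * \<mu>)^2 * (N s \<bullet> N s)"
        proof -
          have "trace ((Et ** S\<^sub>E) ** (Et ** S\<^sub>E)) = c^2 * trace ((F t ** S\<^sub>E) ** (F t ** S\<^sub>E))"
            unfolding Et F_def c_def by (rule trace_scale_mult2)
          also have "\<dots> = c^2 * (\<mu>^2 * (N s \<bullet> N s))"
            using qf[of t] Ni(2)[of s] by (simp add: s_def)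
          finally show ?thesis by (simp add: power_mult_distrib)
        qed
        have "sqrt (n - \<beta>^2) * sqrt (N s \<bullet> N s) < n - \<alpha>^2"
        proof -
          have be: "\<beta>^2 = \<alpha>^2 * ((1 + \<alpha>) / 2)" using bsq by (simp add: \<beta>_def)
          have NNe: "N s \<bullet> N s = n - \<alpha>^2 + (Dq * s^2 - 2 * B * s)" using Ni(2)[of s] by simp
          have "(n - \<alpha>^2)^2 > (n - \<beta>^2) * (n - \<alpha>^2 + (Dq * s^2 - 2 * B * s))"
            by (rule main_ineq[OF alpha p3 p4 n1 Dq_def Dq B_def sab be])
          hence "(n - \<beta>^2) * (N s \<bullet> N s) < (n - \<alpha>^2)^2" unfolding NNe .
          hence "sqrt ((n - \<beta>^2) * (N s \<bullet> N s)) < sqrt ((n - \<alpha>^2)^2)" by (rule real_sqrt_less_mono)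
          thus ?thesis using na by (simp add: real_sqrt_mult)
        qed
        hence "(c * \<mu>) * (sqrt (n - \<beta>^2) * sqrt (N s \<bullet> N s)) < (c * \<mu>) * (n - \<alpha>^2)"
          using c0 mu by (intro mult_strict_left_mono) (auto simp: c_def)
        moreover have "sqrt ((c * \<mu>)^2 * (N s \<bullet> N s)) = (c * \<mu>) * sqrt (N s \<bullet> N s)"
          using c0 mu by (simp add: real_sqrt_mult c_def)
        ultimately show ?thesis by (simp add: tr1 tr2 n_def algebra_simps)
      qed
      have Sint: "S\<^sub>E \<in> int_sym (dual_cone (KE Et \<beta>))" by (rule dual_int[OF pEt sS b0' bsqn crit])
      have "\<exists>X. QP_opt A b C Et \<beta> X"
        by (rule exist_opt[OF pEt AEt b0' _ dfe Sint]) (use b1 in \<open>simp add: \<beta>_def\<close>)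
      hence "Et \<in> Swath A b C \<beta>" using pEt AEt by (simp add: Swath_def)
      thus ?thesis using Sint by simp
    qed
    show "let \<delta> = tE - (1/2) * \<alpha> / normE E X\<^sub>E;
             \<beta> = \<alpha> * sqrt ((1 + \<alpha>) / 2)
         in \<delta> > 0 \<and>
            (\<forall>t. tE - \<delta> \<le> t \<and> t \<le> tE + \<delta> \<longrightarrow>
               (let Et = (1 / (1 + t)) *\<^sub>R (E + t *\<^sub>R X\<^sub>E)
                in Et \<in> Swath A b C \<beta> \<and> S\<^sub>E \<in> int_sym (dual_cone (KE Et \<beta>))))"
      unfolding Let_def nE using d0 main by (auto simp: \<delta>_def \<beta>_def)
  qed
  show ?thesis using conj1 conj2 conj3 by blast
qed


end
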